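(* Let $K$ be a field, $V$ an infinite dimensional $K$-vector space with countable basis, $R:=\mathrm{End}_K(V)$, $\mathcal C:=\{\varphi\in R\mid\dim_K\mathrm{im}(\varphi)<\infty\}$ and $\mathcal F:=\{\varphi\in R\mid \dim_K\ker(\varphi)<\infty,\ \dim_K\mathrm{coker}(\varphi)<\infty\}$. Then: (1) $\mathrm{Ass}_l(R)=\mathrm{Ass}_r(R)=\mathrm{Ass}(R)=\{0,\mathcal C\}$; (2) $S_{l,0}(R)=S_{r,0}(R)=S_0(R)=\mathrm{Aut}_K(V)$ and $Q_l(R)=Q_r(R)=Q(R)=R$; (3) $S_{l,\mathcal C}(R)=S_{r,\mathcal C}(R)=S_{\mathcal C}(R)=\mathcal F$ and $Q_{l,\mathcal C}(R)=Q_{r,\mathcal C}(R)=Q_{\mathcal C}(R)=R/\mathcal C$; (4) $\mathrm{maxAss}_l(R)=\mathrm{maxAss}_r(R)=\mathrm{maxAss}(R)=\{\mathcal C\}$; (5) $R/\mathcal C$ is a localization maximal ring and a left (resp. right; left and right) localization maximal ring.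
   Context: Rings are associative with $1$. A multiplicatively closed subset $S$ ($1\in S$, $0\notin S$) is a left Ore set if $Sr\cap Rs\ne\emptyset$ for all $r,s$ ($s\in S$); a left denominator set if moreover $rs=0$ ($s\in S$) implies $tr=0$ for some $t\in S$; right Ore/right denominator sets are defined symmetrically; a denominator set is one that is both a left and a right denominator set. For a left (resp. right) denominator set $S$, $\mathrm{ass}_l(S)=\{r\mid sr=0\text{ some }s\in S\}$ (resp. $\mathrm{ass}_r(S)=\{r\mid rs=0\text{ some }s\in S\}$); for a denominator set these coincide, $\mathrm{ass}(S)$. $\mathrm{Ass}_l(R)$, $\mathrm{Ass}_r(R)$, $\mathrm{Ass}(R)$ are the sets of ideals $\mathrm{ass}$ of left denominator sets, right denominator sets, denominator sets respectively, and $\mathrm{maxAss}_l,\mathrm{maxAss}_r,\mathrm{maxAss}$ their sets of maximal elements under inclusion. For an ideal $\mathfrak a$ in the relevant set, $S_{l,\mathfrak a}(R)$ (resp. $S_{r,\mathfrak a}(R)$, $S_{\mathfrak a}(R)$) is the largest left denominator set (resp. right denominator set, denominator set) $S$ with $\mathrm{ass}(S)=\mathfrak a$ (they exist), and $Q_{l,\mathfrak a}(R)=S_{l,\mathfrak a}(R)^{-1}R$, $Q_{r,\mathfrak a}(R)=RS_{r,\mathfrak a}(R)^{-1}$, $Q_{\mathfrak a}(R)=S_{\mathfrak a}(R)^{-1}R$; for $\mathfrak a=0$ write $S_{l,0},Q_l$, $S_{r,0},Q_r$, $S_0,Q$. A ring $A$ is left (resp. right) localization maximal if $Q_l(A)=A$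 and $\mathrm{Ass}_l(A)=\{0\}$ (resp. $Q_r(A)=A$, $\mathrm{Ass}_r(A)=\{0\}$); left and right localization maximal if both hold; localization maximal if $Q(A)=A$ and $\mathrm{Ass}(A)=\{0\}$. *)

theory Defs
  imports Complex_Main "HOL-Library.Countable_Set" "HOL-Algebra.QuotRing"
begin

definition mult_closed :: "('a,'b) ring_scheme \<Rightarrow> 'a set \<Rightarrow> bool" where
  "mult_closed R S \<longleftrightarrow> S \<subseteq> carrier R \<and> \<one>\<^bsub>R\<^esub> \<in> S \<and> \<zero>\<^bsub>R\<^esub> \<notin> S \<and>
     (\<forall>s\<in>S. \<forall>t\<in>S. s \<otimes>\<^bsub>R\<^esub> t \<in> S)"

definition left_ore :: "('a,'b) ring_scheme \<Rightarrow> 'a set \<Rightarrow> bool" where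
  "left_ore R S \<longleftrightarrow> mult_closed R S \<and>
     (\<forall>r\<in>carrier R. \<forall>s\<in>S. \<exists>s'\<in>S. \<exists>r'\<in>carrier R. s' \<otimes>\<^bsub>R\<^esub> r = r' \<otimes>\<^bsub>R\<^esub> s)"

definition right_ore :: "('a,'b) ring_scheme \<Rightarrow> 'a set \<Rightarrow> bool" where
  "right_ore R S \<longleftrightarrow> mult_closed R S \<and>
     (\<forall>r\<in>carrier R. \<forall>s\<in>S. \<exists>s'\<in>S. \<exists>r'\<in>carrier R. r \<otimes>\<^bsub>R\<^esub> s' = s \<otimes>\<^bsub>R\<^esub> r')"

definition left_denom :: "('a,'b) ring_scheme \<Rightarrow> 'a set \<Rightarrow> bool" where
  "left_denom R S \<longleftrightarrow> left_ore R S \<and>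
     (\<forall>r\<in>carrier R. \<forall>s\<in>S. r \<otimes>\<^bsub>R\<^esub> s = \<zero>\<^bsub>R\<^esub> \<longrightarrow> (\<exists>t\<in>S. t \<otimes>\<^bsub>R\<^esub> r = \<zero>\<^bsub>R\<^esub>))"

definition right_denom :: "('a,'b) ring_scheme \<Rightarrow> 'a set \<Rightarrow> bool" where
  "right_denom R S \<longleftrightarrow> right_ore R S \<and>
     (\<forall>r\<in>carrier R. \<forall>s\<in>S. s \<otimes>\<^bsub>R\<^esub> r = \<zero>\<^bsub>R\<^esub> \<longrightarrow> (\<exists>t\<in>S. r \<otimes>\<^bsub>R\<^esub> t = \<zero>\<^bsub>R\<^esub>))"

definition denom :: "('a,'b) ring_scheme \<Rightarrow> 'a set \<Rightarrow> bool" where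
  "denom R S \<longleftrightarrow> left_denom R S \<and> right_denom R S"

definition ass_l :: "('a,'b) ring_scheme \<Rightarrow> 'a set \<Rightarrow> 'a set" where
  "ass_l R S = {r \<in> carrier R. \<exists>s\<in>S. s \<otimes>\<^bsub>R\<^esub> r = \<zero>\<^bsub>R\<^esub>}"

definition ass_r :: "('a,'b) ring_scheme \<Rightarrow> 'a set \<Rightarrow> 'a set" where
  "ass_r R S = {r \<in> carrier R. \<exists>s\<in>S. r \<otimes>\<^bsub>R\<^esub> s = \<zero>\<^bsub>R\<^esub>}"

text \<open>For a denominator set, ass_l and ass_r coincide; ass is their common value.\<close>
definition ass :: "('a,'b) ring_scheme \<Rightarrow> 'a set \<Rightarrow> 'a set" where
  "ass R S = ass_l R S"

definition Ass_l :: "('a,'b) ring_scheme \<Rightarrow> 'a set set" where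
  "Ass_l R = {ass_l R S | S. left_denom R S}"
definition Ass_r :: "('a,'b) ring_scheme \<Rightarrow> 'a set set" where
  "Ass_r R = {ass_r R S | S. right_denom R S}"
definition Ass :: "('a,'b) ring_scheme \<Rightarrow> 'a set set" where
  "Ass R = {ass R S | S. denom R S}"

definition maximals :: "'a set set \<Rightarrow> 'a set set" where
  "maximals X = {a \<in> X. \<forall>b\<in>X. a \<subseteq> b \<longrightarrow> b = a}"

definition maxAss_l :: "('a,'b) ring_scheme \<Rightarrow> 'a set set" where
  "maxAss_l R = maximals (Ass_l R)"
definition maxAss_r :: "('a,'b) ring_scheme \<Rightarrow> 'a set set" where
  "maxAss_r R = maximals (Ass_r R)"
definition maxAss :: "('a,'b) ring_scheme \<Rightarrow> 'a set set" where
  "maxAss R = maximals (Ass R)"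

definition S_l :: "('a,'b) ring_scheme \<Rightarrow> 'a set \<Rightarrow> 'a set" where
  "S_l R a = (THE S. left_denom R S \<and> ass_l R S = a \<and>
                 (\<forall>T. left_denom R T \<and> ass_l R T = a \<longrightarrow> T \<subseteq> S))"
definition S_r :: "('a,'b) ring_scheme \<Rightarrow> 'a set \<Rightarrow> 'a set" where
  "S_r R a = (THE S. right_denom R S \<and> ass_r R S = a \<and>
                 (\<forall>T. right_denom R T \<and> ass_r R T = a \<longrightarrow> T \<subseteq> S))"
definition S_d :: "('a,'b) ring_scheme \<Rightarrow> 'a set \<Rightarrow> 'a set" where
  "S_d R a = (THE S. denom R S \<and> ass R S = a \<and>
                 (\<forall>T. denom R T \<and> ass R T = a \<longrightarrow> T \<subseteq> S))"

text \<open>(Q, sigma) is (a model of) the left ring of fractions S^{-1}R: sigma is a ring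
  homomorphism sending S to units, with kernel ass_l(S), and every element of Q has the
  form sigma(s)^{-1} sigma(r).  This determines S^{-1}R uniquely up to isomorphism over R.\<close>
definition left_localization ::
  "('a,'b) ring_scheme \<Rightarrow> 'a set \<Rightarrow> ('c,'d) ring_scheme \<Rightarrow> ('a \<Rightarrow> 'c) \<Rightarrow> bool" where
  "left_localization R S Q \<sigma> \<longleftrightarrow> ring Q \<and> \<sigma> \<in> ring_hom R Q \<and>
     (\<forall>s\<in>S. \<sigma> s \<in> Units Q) \<and>
     {r \<in> carrier R. \<sigma> r = \<zero>\<^bsub>Q\<^esub>} = ass_l R S \<and>
     (\<forall>q\<in>carrier Q. \<exists>s\<in>S. \<exists>r\<in>carrier R. q = inv\<^bsub>Q\<^esub> (\<sigma> s) \<otimes>\<^bsub>Q\<^esub> \<sigma> r)"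

definition right_localization ::
  "('a,'b) ring_scheme \<Rightarrow> 'a set \<Rightarrow> ('c,'d) ring_scheme \<Rightarrow> ('a \<Rightarrow> 'c) \<Rightarrow> bool" where
  "right_localization R S Q \<sigma> \<longleftrightarrow> ring Q \<and> \<sigma> \<in> ring_hom R Q \<and>
     (\<forall>s\<in>S. \<sigma> s \<in> Units Q) \<and>
     {r \<in> carrier R. \<sigma> r = \<zero>\<^bsub>Q\<^esub>} = ass_r R S \<and>
     (\<forall>q\<in>carrier Q. \<exists>s\<in>S. \<exists>r\<in>carrier R. q = \<sigma> r \<otimes>\<^bsub>Q\<^esub> inv\<^bsub>Q\<^esub> (\<sigma> s))"

text \<open>For a denominator set S, Q_a(R) = S^{-1}R.\<close>
definition localization ::
  "('a,'b) ring_scheme \<Rightarrow> 'a set \<Rightarrow> ('c,'d) ring_scheme \<Rightarrow> ('a \<Rightarrow> 'c) \<Rightarrow> bool" where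
  "localization R S Q \<sigma> \<longleftrightarrow> left_localization R S Q \<sigma>"

text \<open>Localization maximal rings: Q(A) = A means the canonical map A -> Q(A) is an
  isomorphism, i.e. the identity A -> A is a ring of fractions of A at S_0(A).\<close>
definition left_loc_max :: "('a,'b) ring_scheme \<Rightarrow> bool" where
  "left_loc_max A \<longleftrightarrow> left_localization A (S_l A {\<zero>\<^bsub>A\<^esub>}) A (\<lambda>x. x) \<and> Ass_l A = {{\<zero>\<^bsub>A\<^esub>}}"
definition right_loc_max :: "('a,'b) ring_scheme \<Rightarrow> bool" where
  "right_loc_max A \<longleftrightarrow> right_localization A (S_r A {\<zero>\<^bsub>A\<^esub>}) A (\<lambda>x. x) \<and> Ass_r A = {{\<zero>\<^bsub>A\<^esub>}}"
definition loc_max :: "('a,'b) ring_scheme \<Rightarrow> bool" where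
  "loc_max A \<longleftrightarrow> localization A (S_d A {\<zero>\<^bsub>A\<^esub>}) A (\<lambda>x. x) \<and> Ass A = {{\<zero>\<^bsub>A\<^esub>}}"

definition End_ring :: "('k::field \<Rightarrow> 'v::ab_group_add \<Rightarrow> 'v) \<Rightarrow> ('v \<Rightarrow> 'v) ring" where
  "End_ring scale = \<lparr> carrier = {f. Vector_Spaces.linear scale scale f},
      mult = (\<lambda>f g. f \<circ> g), one = (\<lambda>x. x),
      zero = (\<lambda>x. 0), add = (\<lambda>f g x. f x + g x) \<rparr>"

definition fin_dim :: "('k::field \<Rightarrow> 'v::ab_group_add \<Rightarrow> 'v) \<Rightarrow> 'v set \<Rightarrow> bool" where
  "fin_dim scale W \<longleftrightarrow> (\<exists>B. finite B \<and> module.span scale B = W)"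

text \<open>A subspace W has finite codimension (dim V/W finite) iff W plus a finite set spans V.\<close>
definition fin_codim :: "('k::field \<Rightarrow> 'v::ab_group_add \<Rightarrow> 'v) \<Rightarrow> 'v set \<Rightarrow> bool" where
  "fin_codim scale W \<longleftrightarrow> (\<exists>B. finite B \<and> module.span scale (W \<union> B) = UNIV)"

definition finrank_ideal :: "('k::field \<Rightarrow> 'v::ab_group_add \<Rightarrow> 'v) \<Rightarrow> ('v \<Rightarrow> 'v) set" where
  "finrank_ideal scale = {\<phi> \<in> carrier (End_ring scale). fin_dim scale (range \<phi>)}"

definition fredholm_set :: "('k::field \<Rightarrow> 'v::ab_group_add \<Rightarrow> 'v) \<Rightarrow> ('v \<Rightarrow> 'v) set" where
  "fredholm_set scale = {\<phi> \<in> carrier (End_ring scale).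
      fin_dim scale {x. \<phi> x = 0} \<and> fin_codim scale (range \<phi>)}"

definition Aut :: "('k::field \<Rightarrow> 'v::ab_group_add \<Rightarrow> 'v) \<Rightarrow> ('v \<Rightarrow> 'v) set" where
  "Aut scale = {\<phi>. Vector_Spaces.linear scale scale \<phi> \<and> bij \<phi>}"

end

theory Submission
  imports Defs
begin

lemma (in ring) minus_zero_eq:
  assumes "a \<in> carrier R" "b \<in> carrier R" "a \<ominus> b = \<zero>"
  shows "a = b"
proof -
  have "a = (a \<ominus> b) \<oplus> b" using assms(1,2) by algebra
  thus ?thesis using assms by simp
qed

lemma unit_cancel_l:
  fixes Q (structure)
  assumes "ring Q" "u \<in> Units Q" "x \<in> carrier Q" "u \<otimes> x = \<zero>"
  shows "x = \<zero>"
proof -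
  interpret ring Q by fact
  have "inv u \<otimes> (u \<otimes> x) = x" using assms(1-3) by (simp add: m_assoc[symmetric] Units_closed)
  thus ?thesis using assms by simp
qed

lemma unit_cancel_r:
  fixes Q (structure)
  assumes "ring Q" "u \<in> Units Q" "x \<in> carrier Q" "x \<otimes> u = \<zero>"
  shows "x = \<zero>"
proof -
  interpret ring Q by fact
  have "(x \<otimes> u) \<otimes> inv u = x" using assms(1-3) by (simp add: m_assoc Units_closed)
  thus ?thesis using assms by simp
qed

lemma G_main:
  fixes R (structure) and Q (structure)
  assumes rR: "ring R" and rQ: "ring Q" and hom: "h \<in> ring_hom R Q"
    and surj: "h ` carrier R = carrier Q"
    and nt: "\<one>\<^bsub>Q\<^esub> \<noteq> \<zero>\<^bsub>Q\<^esub>"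
    and Idef: "I = {r \<in> carrier R. h r = \<zero>\<^bsub>Q\<^esub>}"
    and Sdef: "S = {s \<in> carrier R. h s \<in> Units Q}"
    and annl: "\<And>c. c \<in> I \<Longrightarrow> \<exists>t\<in>S. t \<otimes> c = \<zero>"
    and annr: "\<And>c. c \<in> I \<Longrightarrow> \<exists>t\<in>S. c \<otimes> t = \<zero>"
  shows "denom R S \<and> ass_l R S = I \<and> ass_r R S = I \<and> left_localization R S Q h
     \<and> right_localization R S Q h"
proof -
  interpret R: ring R by fact
  interpret Q: ring Q by fact
  interpret H: ring_hom_ring R Q h using rR rQ hom by (simp add: ring_hom_ring_def ring_hom_ring_axioms_def)
  have hc: "\<And>x. x \<in> carrier R \<Longrightarrow> h x \<in> carrier Q" by simp
  have mc: "mult_closed R S"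
    unfolding mult_closed_def Sdef using nt unit_cancel_l[OF rQ, of "\<zero>\<^bsub>Q\<^esub>" "\<one>\<^bsub>Q\<^esub>"]
    by (auto simp: Q.Units_closed)
  have obt: "\<exists>g\<in>carrier R. h g = y" if "y \<in> carrier Q" for y using surj that by (metis imageE)
  have lore: "left_ore R S"
    unfolding left_ore_def
  proof (intro conjI mc ballI)
    fix r s assume r: "r \<in> carrier R" and s: "s \<in> S"
    hence sc: "s \<in> carrier R" and su: "h s \<in> Units Q" using Sdef by auto
    obtain g where g: "g \<in> carrier R" "h g = inv\<^bsub>Q\<^esub> (h s)" using obt[of "inv\<^bsub>Q\<^esub> (h s)"] su by auto
    define c where "c = r \<otimes> g \<otimes> s \<ominus> r"
    have cc: "c \<in> carrier R" using r g sc by (simp add: c_def)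
    have "h c = h r \<otimes>\<^bsub>Q\<^esub> (inv\<^bsub>Q\<^esub> (h s) \<otimes>\<^bsub>Q\<^esub> h s) \<ominus>\<^bsub>Q\<^esub> h r"
      using r g sc su by (simp add: c_def R.minus_eq Q.minus_eq Q.m_assoc Q.Units_closed)
    also have "\<dots> = \<zero>\<^bsub>Q\<^esub>" using su r by (simp add: Q.minus_eq Q.r_neg)
    finally have "c \<in> I" using Idef cc by auto
    then obtain t where t: "t \<in> S" "t \<otimes> c = \<zero>" using annl by blast
    have tc: "t \<in> carrier R" using t Sdef by auto
    have "t \<otimes> c = t \<otimes> (r \<otimes> g \<otimes> s) \<ominus> t \<otimes> r"
      unfolding c_def using r g sc tc by algebra
    hence e: "t \<otimes> (r \<otimes> g \<otimes> s) \<ominus> t \<otimes> r = \<zero>" using t(2) by simp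
    have "t \<otimes> (r \<otimes> g \<otimes> s) = t \<otimes> r" by (rule R.minus_zero_eq[OF _ _ e]) (simp_all add: r g sc tc)
    hence "t \<otimes> r = (t \<otimes> r \<otimes> g) \<otimes> s" using r g sc tc by (simp add: R.m_assoc)
    thus "\<exists>s'\<in>S. \<exists>r'\<in>carrier R. s' \<otimes> r = r' \<otimes> s" using t tc r g by blast
  qed
  have rore: "right_ore R S"
    unfolding right_ore_def
  proof (intro conjI mc ballI)
    fix r s assume r: "r \<in> carrier R" and s: "s \<in> S"
    hence sc: "s \<in> carrier R" and su: "h s \<in> Units Q" using Sdef by auto
    obtain g where g: "g \<in> carrier R" "h g = inv\<^bsub>Q\<^esub> (h s)" using obt[of "inv\<^bsub>Q\<^esub> (h s)"] su by auto
    define c where "c = s \<otimes> g \<otimes> r \<ominus> r"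
    have cc: "c \<in> carrier R" using r g sc by (simp add: c_def)
    have "h c = (h s \<otimes>\<^bsub>Q\<^esub> inv\<^bsub>Q\<^esub> (h s)) \<otimes>\<^bsub>Q\<^esub> h r \<ominus>\<^bsub>Q\<^esub> h r"
      using r g sc su by (simp add: c_def R.minus_eq Q.minus_eq Q.m_assoc Q.Units_closed)
    also have "\<dots> = \<zero>\<^bsub>Q\<^esub>" using su r by (simp add: Q.minus_eq Q.r_neg)
    finally have "c \<in> I" using Idef cc by auto
    then obtain t where t: "t \<in> S" "c \<otimes> t = \<zero>" using annr by blast
    have tc: "t \<in> carrier R" using t Sdef by auto
    have "c \<otimes> t = s \<otimes> (g \<otimes> r \<otimes> t) \<ominus> r \<otimes> t"
      unfolding c_def using r g sc tc by algebra
    hence e: "s \<otimes> (g \<otimes> r \<otimes> t) \<ominus> r \<otimes> t = \<zero>" using t(2) by simp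
    have "s \<otimes> (g \<otimes> r \<otimes> t) = r \<otimes> t" by (rule R.minus_zero_eq[OF _ _ e]) (simp_all add: r g sc tc)
    hence "r \<otimes> t = s \<otimes> (g \<otimes> r \<otimes> t)" by simp
    thus "\<exists>s'\<in>S. \<exists>r'\<in>carrier R. r \<otimes> s' = s \<otimes> r'" using t tc r g by blast
  qed
  have kill_l: "h r = \<zero>\<^bsub>Q\<^esub>" if "r \<in> carrier R" "s \<in> S" "s \<otimes> r = \<zero>" for r s
  proof -
    have "h s \<otimes>\<^bsub>Q\<^esub> h r = \<zero>\<^bsub>Q\<^esub>" using that Sdef by (auto simp flip: H.hom_mult)
    thus ?thesis using unit_cancel_l[OF rQ, of "h s" "h r"] that Sdef by auto
  qed
  have kill_r: "h r = \<zero>\<^bsub>Q\<^esub>" if "r \<in> carrier R" "s \<in> S" "r \<otimes> s = \<zero>" for r s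
  proof -
    have "h r \<otimes>\<^bsub>Q\<^esub> h s = \<zero>\<^bsub>Q\<^esub>" using that Sdef by (auto simp flip: H.hom_mult)
    thus ?thesis using unit_cancel_r[OF rQ, of "h s" "h r"] that Sdef by auto
  qed
  have ld: "left_denom R S" unfolding left_denom_def
    using lore kill_r annl Idef by blast
  have rd: "right_denom R S" unfolding right_denom_def
    using rore kill_l annr Idef by blast
  have al: "ass_l R S = I" unfolding ass_l_def using kill_l annl Idef by blast
  have ar: "ass_r R S = I" unfolding ass_r_def using kill_r annr Idef by blast
  have un: "\<forall>s\<in>S. h s \<in> Units Q" using Sdef by auto
  have one: "\<one> \<in> S" using mc by (simp add: mult_closed_def)
  have rep: "\<forall>q\<in>carrier Q. \<exists>s\<in>S. \<exists>r\<in>carrier R. q = inv\<^bsub>Q\<^esub> (h s) \<otimes>\<^bsub>Q\<^esub> h r"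
  proof
    fix q assume "q \<in> carrier Q"
    then obtain g where "g \<in> carrier R" "h g = q" using obt by blast
    thus "\<exists>s\<in>S. \<exists>r\<in>carrier R. q = inv\<^bsub>Q\<^esub> (h s) \<otimes>\<^bsub>Q\<^esub> h r"
      using one by (intro bexI[of _ "\<one>"] bexI[of _ g]) auto
  qed
  have rep2: "\<forall>q\<in>carrier Q. \<exists>s\<in>S. \<exists>r\<in>carrier R. q = h r \<otimes>\<^bsub>Q\<^esub> inv\<^bsub>Q\<^esub> (h s)"
  proof
    fix q assume "q \<in> carrier Q"
    then obtain g where "g \<in> carrier R" "h g = q" using obt by blast
    thus "\<exists>s\<in>S. \<exists>r\<in>carrier R. q = h r \<otimes>\<^bsub>Q\<^esub> inv\<^bsub>Q\<^esub> (h s)"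
      using one by (intro bexI[of _ "\<one>"] bexI[of _ g]) auto
  qed
  show ?thesis
    unfolding denom_def left_localization_def right_localization_def
    using ld rd al ar un rep rep2 rQ hom Idef by auto
qed

lemma ld_reg:
  fixes R (structure)
  assumes "left_denom R T" "t \<in> T" "r \<in> carrier R"
  shows "t \<otimes> r = \<zero> \<Longrightarrow> r \<in> ass_l R T" "r \<otimes> t = \<zero> \<Longrightarrow> r \<in> ass_l R T"
  using assms unfolding left_denom_def ass_l_def by auto

lemma rd_reg:
  fixes R (structure)
  assumes "right_denom R T" "t \<in> T" "r \<in> carrier R"
  shows "t \<otimes> r = \<zero> \<Longrightarrow> r \<in> ass_r R T" "r \<otimes> t = \<zero> \<Longrightarrow> r \<in> ass_r R T"
  using assms unfolding right_denom_def ass_r_def by auto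

lemma ld_carrier:
  fixes R (structure)
  assumes "left_denom R T" shows "T \<subseteq> carrier R" "\<one> \<in> T" "\<zero> \<notin> T"
  using assms unfolding left_denom_def left_ore_def mult_closed_def by auto

lemma rd_carrier:
  fixes R (structure)
  assumes "right_denom R T" shows "T \<subseteq> carrier R" "\<one> \<in> T" "\<zero> \<notin> T"
  using assms unfolding right_denom_def right_ore_def mult_closed_def by auto

lemma ld_ass_mult:
  fixes R (structure)
  assumes rR: "ring R" and ld: "left_denom R T" and r: "r \<in> ass_l R T"
    and a: "a \<in> carrier R" and b: "b \<in> carrier R"
  shows "a \<otimes> r \<otimes> b \<in> ass_l R T"
proof -
  interpret ring R by fact
  obtain t where t: "t \<in> T" "t \<otimes> r = \<zero>" and rc: "r \<in> carrier R" using r unfolding ass_l_def by auto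
  have tc: "t \<in> carrier R" using t ld_carrier[OF ld] by auto
  obtain t' a' where t': "t' \<in> T" "a' \<in> carrier R" "t' \<otimes> a = a' \<otimes> t"
    using ld a t unfolding left_denom_def left_ore_def by blast
  have t'c: "t' \<in> carrier R" using t' ld_carrier[OF ld] by auto
  have "t' \<otimes> (a \<otimes> r \<otimes> b) = (t' \<otimes> a) \<otimes> r \<otimes> b" using a b rc t'c by (simp add: m_assoc)
  also have "\<dots> = a' \<otimes> (t \<otimes> r) \<otimes> b" using t' a b rc tc by (simp add: m_assoc)
  also have "\<dots> = \<zero>" using t a b t'(2) by simp
  finally show ?thesis unfolding ass_l_def using t' a b rc by auto
qed

lemma ld_ass_add:
  fixes R (structure)
  assumes rR: "ring R" and ld: "left_denom R T" and r1: "r1 \<in> ass_l R T" and r2: "r2 \<in> ass_l R T"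
  shows "r1 \<oplus> r2 \<in> ass_l R T"
proof -
  interpret ring R by fact
  obtain t1 where t1: "t1 \<in> T" "t1 \<otimes> r1 = \<zero>" and r1c: "r1 \<in> carrier R" using r1 unfolding ass_l_def by auto
  obtain t2 where t2: "t2 \<in> T" "t2 \<otimes> r2 = \<zero>" and r2c: "r2 \<in> carrier R" using r2 unfolding ass_l_def by auto
  have tc: "t1 \<in> carrier R" "t2 \<in> carrier R" using t1 t2 ld_carrier[OF ld] by auto
  obtain t' a' where t': "t' \<in> T" "a' \<in> carrier R" "t' \<otimes> t1 = a' \<otimes> t2"
    using ld tc t2 unfolding left_denom_def left_ore_def by blast
  have t'c: "t' \<in> carrier R" using t' ld_carrier[OF ld] by auto
  have tt: "t' \<otimes> t1 \<in> T" using ld t'(1) t1(1) unfolding left_denom_def left_ore_def mult_closed_def by auto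
  have "(t' \<otimes> t1) \<otimes> (r1 \<oplus> r2) = t' \<otimes> (t1 \<otimes> r1) \<oplus> (t' \<otimes> t1) \<otimes> r2"
    using tc t'c r1c r2c by (simp add: m_assoc r_distr)
  also have "\<dots> = a' \<otimes> (t2 \<otimes> r2)" using t' t1 tc r2c t'c by (simp add: m_assoc)
  also have "\<dots> = \<zero>" using t2 t' by simp
  finally show ?thesis unfolding ass_l_def using tt r1c r2c by auto
qed

lemma rd_ass_mult:
  fixes R (structure)
  assumes rR: "ring R" and rd: "right_denom R T" and r: "r \<in> ass_r R T"
    and a: "a \<in> carrier R" and b: "b \<in> carrier R"
  shows "a \<otimes> r \<otimes> b \<in> ass_r R T"
proof -
  interpret ring R by fact
  obtain t where t: "t \<in> T" "r \<otimes> t = \<zero>" and rc: "r \<in> carrier R" using r unfolding ass_r_def by auto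
  have tc: "t \<in> carrier R" using t rd_carrier[OF rd] by auto
  obtain t' b' where t': "t' \<in> T" "b' \<in> carrier R" "b \<otimes> t' = t \<otimes> b'"
    using rd b t unfolding right_denom_def right_ore_def by blast
  have t'c: "t' \<in> carrier R" using t' rd_carrier[OF rd] by auto
  have "(a \<otimes> r \<otimes> b) \<otimes> t' = a \<otimes> r \<otimes> (b \<otimes> t')" using a b rc t'c by (simp add: m_assoc)
  also have "\<dots> = a \<otimes> (r \<otimes> t) \<otimes> b'" using t' a b rc tc by (simp add: m_assoc)
  also have "\<dots> = \<zero>" using t a t' by simp
  finally show ?thesis unfolding ass_r_def using t' a b rc by auto
qed

lemma rd_ass_add:
  fixes R (structure)
  assumes rR: "ring R" and rd: "right_denom R T" and r1: "r1 \<in> ass_r R T" and r2: "r2 \<in> ass_r R T"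
  shows "r1 \<oplus> r2 \<in> ass_r R T"
proof -
  interpret ring R by fact
  obtain t1 where t1: "t1 \<in> T" "r1 \<otimes> t1 = \<zero>" and r1c: "r1 \<in> carrier R" using r1 unfolding ass_r_def by auto
  obtain t2 where t2: "t2 \<in> T" "r2 \<otimes> t2 = \<zero>" and r2c: "r2 \<in> carrier R" using r2 unfolding ass_r_def by auto
  have tc: "t1 \<in> carrier R" "t2 \<in> carrier R" using t1 t2 rd_carrier[OF rd] by auto
  obtain t' b' where t': "t' \<in> T" "b' \<in> carrier R" "t1 \<otimes> t' = t2 \<otimes> b'"
    using rd tc t2 unfolding right_denom_def right_ore_def by blast
  have t'c: "t' \<in> carrier R" using t' rd_carrier[OF rd] by auto
  have tt: "t1 \<otimes> t' \<in> T" using rd t'(1) t1(1) unfolding right_denom_def right_ore_def mult_closed_def by auto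
  have "(r1 \<oplus> r2) \<otimes> (t1 \<otimes> t') = (r1 \<otimes> t1) \<otimes> t' \<oplus> r2 \<otimes> (t1 \<otimes> t')"
    using tc t'c r1c r2c by (simp add: m_assoc l_distr)
  also have "\<dots> = (r2 \<otimes> t2) \<otimes> b'" using t' t1 tc r2c t'c by (simp add: m_assoc)
  also have "\<dots> = \<zero>" using t2 t' by simp
  finally show ?thesis unfolding ass_r_def using tt r1c r2c by auto
qed

lemma ld_ass_zero:
  fixes R (structure)
  assumes "ring R" "left_denom R T" shows "\<zero> \<in> ass_l R T"
proof -
  interpret ring R by fact
  show ?thesis unfolding ass_l_def using ld_carrier[OF assms(2)] by force
qed

lemma rd_ass_zero:
  fixes R (structure)
  assumes "ring R" "right_denom R T" shows "\<zero> \<in> ass_r R T"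
proof -
  interpret ring R by fact
  show ?thesis unfolding ass_r_def using rd_carrier[OF assms(2)] by force
qed

lemma ld_ass_one:
  fixes R (structure)
  assumes "ring R" "left_denom R T" shows "\<one> \<notin> ass_l R T"
proof -
  interpret ring R by fact
  show ?thesis unfolding ass_l_def using ld_carrier[OF assms(2)] by force
qed

lemma rd_ass_one:
  fixes R (structure)
  assumes "ring R" "right_denom R T" shows "\<one> \<notin> ass_r R T"
proof -
  interpret ring R by fact
  show ?thesis unfolding ass_r_def using rd_carrier[OF assms(2)] by force
qed

lemma S_l_eq:
  assumes "left_denom R S0" "ass_l R S0 = a" "\<And>T. left_denom R T \<Longrightarrow> ass_l R T = a \<Longrightarrow> T \<subseteq> S0"
  shows "S_l R a = S0"
  unfolding S_l_def by (rule the_equality) (use assms in blast)+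

lemma S_r_eq:
  assumes "right_denom R S0" "ass_r R S0 = a" "\<And>T. right_denom R T \<Longrightarrow> ass_r R T = a \<Longrightarrow> T \<subseteq> S0"
  shows "S_r R a = S0"
  unfolding S_r_def by (rule the_equality) (use assms in blast)+

lemma S_d_eq:
  assumes "denom R S0" "ass R S0 = a" "\<And>T. denom R T \<Longrightarrow> ass R T = a \<Longrightarrow> T \<subseteq> S0"
  shows "S_d R a = S0"
  unfolding S_d_def by (rule the_equality) (use assms in blast)+

lemma quot_facts:
  fixes R (structure)
  assumes I: "ideal I R"
  shows "ring (R Quot I)" "(+>) I \<in> ring_hom R (R Quot I)"
    "(+>) I ` carrier R = carrier (R Quot I)"
    "{r \<in> carrier R. I +> r = \<zero>\<^bsub>R Quot I\<^esub>} = I"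
    "\<one> \<notin> I \<Longrightarrow> \<one>\<^bsub>R Quot I\<^esub> \<noteq> \<zero>\<^bsub>R Quot I\<^esub>"
proof -
  interpret ideal I R by fact
  show "ring (R Quot I)" by (rule quotient_is_ring)
  show "(+>) I \<in> ring_hom R (R Quot I)" by (rule rcos_ring_hom)
  show "(+>) I ` carrier R = carrier (R Quot I)"
    unfolding FactRing_def A_RCOSETS_def'[of R I] by auto
  have z: "\<zero>\<^bsub>R Quot I\<^esub> = I" by (simp add: FactRing_def)
  have o: "\<one>\<^bsub>R Quot I\<^esub> = I +> \<one>" by (simp add: FactRing_def)
  have ab: "abelian_subgroup I R"
    by (simp add: abelian_subgroupI3 is_additive_subgroup is_abelian_group)
  have "I +> r = I \<longleftrightarrow> r \<in> I" if "r \<in> carrier R" for r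
    using abelian_subgroup.a_rcos_const[OF ab] abelian_subgroup.a_rcos_self[OF ab that] by auto
  thus "{r \<in> carrier R. I +> r = \<zero>\<^bsub>R Quot I\<^esub>} = I" using z a_subset by auto
  show "\<one> \<notin> I \<Longrightarrow> \<one>\<^bsub>R Quot I\<^esub> \<noteq> \<zero>\<^bsub>R Quot I\<^esub>"
    using \<open>\<And>r. r \<in> carrier R \<Longrightarrow> (I +> r = I) = (r \<in> I)\<close>[of \<one>] z o by auto
qed

context vector_space begin


lemma lin_mh: "Vector_Spaces.linear scale scale f \<longleftrightarrow> module_hom scale scale f"
  by (simp add: module_hom_iff_linear)

lemma carrier_ER: "carrier (End_ring scale) = {f. module_hom scale scale f}"
  by (simp add: End_ring_def lin_mh)

lemma ER_simps[simp]: "f \<otimes>\<^bsub>End_ring scale\<^esub> g = f \<circ> g" "\<one>\<^bsub>End_ring scale\<^esub> = (\<lambda>x. x)" "\<zero>\<^bsub>End_ring scale\<^esub> = (\<lambda>x. 0)"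
  "f \<oplus>\<^bsub>End_ring scale\<^esub> g = (\<lambda>x. f x + g x)"
  by (simp_all add: End_ring_def)

lemma mp: "module_pair scale scale"
  by (simp add: module_pair_def module_axioms)

lemma mh_add: "module_hom scale scale f \<Longrightarrow> module_hom scale scale g \<Longrightarrow> module_hom scale scale (\<lambda>x. f x + g x)"
  by (rule module_pair.module_hom_add[OF mp])
lemma mh_diff: "module_hom scale scale f \<Longrightarrow> module_hom scale scale g \<Longrightarrow> module_hom scale scale (\<lambda>x. f x - g x)"
  by (rule module_pair.module_hom_sub[OF mp])
lemma mh_neg: "module_hom scale scale f \<Longrightarrow> module_hom scale scale (\<lambda>x. - f x)"
  by (rule module_pair.module_hom_neg[OF mp])
lemma mh_zero: "module_hom scale scale (\<lambda>x. 0)"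
  by (rule module_pair.module_hom_zero[OF mp])
lemma mh_id: "module_hom scale scale (\<lambda>x. x)"
  using linear_ident by (simp add: lin_mh)
lemma mh_comp: "module_hom scale scale f \<Longrightarrow> module_hom scale scale g \<Longrightarrow> module_hom scale scale (f \<circ> g)"
  by (rule module_hom_compose)

lemma ring_ER: "ring (End_ring scale)"
proof (rule ringI)
  show "abelian_group (End_ring scale)"
  proof (rule abelian_groupI)
    fix x assume x: "x \<in> carrier (End_ring scale)"
    show "\<exists>y\<in>carrier (End_ring scale). y \<oplus>\<^bsub>End_ring scale\<^esub> x = \<zero>\<^bsub>End_ring scale\<^esub>"
      using x by (intro bexI[of _ "\<lambda>v. - x v"]) (auto simp: carrier_ER mh_neg)
  qed (auto simp: carrier_ER mh_add mh_zero add.assoc add.commute)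
  show "monoid (End_ring scale)"
    by (rule monoidI) (auto simp: carrier_ER mh_comp mh_id)
  fix x y z assume "x \<in> carrier (End_ring scale)" "y \<in> carrier (End_ring scale)" "z \<in> carrier (End_ring scale)"
  then show "(x \<oplus>\<^bsub>End_ring scale\<^esub> y) \<otimes>\<^bsub>End_ring scale\<^esub> z = x \<otimes>\<^bsub>End_ring scale\<^esub> z \<oplus>\<^bsub>End_ring scale\<^esub> y \<otimes>\<^bsub>End_ring scale\<^esub> z"
    "z \<otimes>\<^bsub>End_ring scale\<^esub> (x \<oplus>\<^bsub>End_ring scale\<^esub> y) = z \<otimes>\<^bsub>End_ring scale\<^esub> x \<oplus>\<^bsub>End_ring scale\<^esub> z \<otimes>\<^bsub>End_ring scale\<^esub> y"
    by (auto simp: carrier_ER module_hom.add fun_eq_iff)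
qed

lemma ER_a_inv: "f \<in> carrier (End_ring scale) \<Longrightarrow> \<ominus>\<^bsub>End_ring scale\<^esub> f = (\<lambda>x. - f x)"
proof -
  assume f: "f \<in> carrier (End_ring scale)"
  interpret ring "End_ring scale" by (rule ring_ER)
  show ?thesis
    by (rule minus_equality) (use f in \<open>auto simp: carrier_ER mh_neg\<close>)
qed

lemma Units_ER: "Units (End_ring scale) = Aut scale"
proof
  show "Units (End_ring scale) \<subseteq> Aut scale"
  proof
    fix f assume "f \<in> Units (End_ring scale)"
    then obtain g where "f \<in> carrier (End_ring scale)" "g \<in> carrier (End_ring scale)" "g \<circ> f = (\<lambda>x. x)" "f \<circ> g = (\<lambda>x. x)"
      unfolding Units_def by auto
    thus "f \<in> Aut scale" unfolding Aut_def
      by (auto simp: carrier_ER lin_mh intro!: o_bij[of g f] simp: id_def)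
  qed
  show "Aut scale \<subseteq> Units (End_ring scale)"
  proof
    fix f assume "f \<in> Aut scale"
    hence f: "module_hom scale scale f" "bij f" unfolding Aut_def by (auto simp: lin_mh)
    have g: "module_hom scale scale (inv_into UNIV f)"
      using module_pair.bij_module_hom_imp_inv_module_hom[OF mp f] by simp
    show "f \<in> Units (End_ring scale)" unfolding Units_def using f g
      by (auto simp: carrier_ER fun_eq_iff bij_is_inj bij_is_surj surj_f_inv_f
           intro!: bexI[of _ "inv_into UNIV f"])
  qed
qed

lemma proj_exists:
  assumes "subspace W"
  obtains P where "module_hom scale scale P" "range P = W" "\<And>x. x \<in> W \<Longrightarrow> P x = x"
proof -
  interpret vector_space_pair scale scale by unfold_locales
  obtain g where g: "g ` UNIV \<subseteq> W" "Vector_Spaces.linear scale scale g" "\<forall>v\<in>W. g (id v) = v"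
    using linear_exists_left_inverse_on[of id W] assms linear_id by auto
  have "W \<subseteq> range g" using g(3) by (metis id_apply rangeI subsetI)
  hence "range g = W" using g(1) by blast
  thus ?thesis using that g by (auto simp: lin_mh)
qed

lemma fd_span: "finite D \<Longrightarrow> fin_dim scale (span D)"
  unfolding fin_dim_def by blast

lemma fd_sub:
  assumes "fin_dim scale W'" "subspace W" "W \<subseteq> W'"
  shows "fin_dim scale W"
proof -
  obtain D where D: "finite D" "span D = W'" using assms(1) unfolding fin_dim_def by blast
  obtain B where B: "B \<subseteq> W" "independent B" "W \<subseteq> span B"
    using maximal_independent_subset[of W] by blast
  have "B \<subseteq> span D" using B(1) assms(3) D(2) by blast
  hence "finite B" using independent_span_bound[OF D(1) B(2)] by blast
  moreover have "span B = W" using B span_minimal[OF B(1) assms(2)] by blast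
  ultimately show ?thesis unfolding fin_dim_def by blast
qed

lemma fd_image:
  assumes "module_hom scale scale f" "fin_dim scale W"
  shows "fin_dim scale (f ` W)"
proof -
  obtain D where D: "finite D" "span D = W" using assms(2) unfolding fin_dim_def by blast
  have "f ` W = span (f ` D)" using module_hom.span_image[OF assms(1)] D(2) by simp
  thus ?thesis using D(1) unfolding fin_dim_def by blast
qed

lemma subspace_range: "module_hom scale scale f \<Longrightarrow> subspace (range f)"
  using module_hom.subspace_image[of scale scale f UNIV] by simp

lemma subspace_ker: "module_hom scale scale f \<Longrightarrow> subspace {x. f x = 0}"
  using module_hom.subspace_kernel by blast

lemma C_def': "finrank_ideal scale = {f. module_hom scale scale f \<and> fin_dim scale (range f)}"
  unfolding finrank_ideal_def carrier_ER by simp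

lemma F_def': "fredholm_set scale = {f. module_hom scale scale f \<and> fin_dim scale {x. f x = 0}
   \<and> fin_codim scale (range f)}"
  unfolding fredholm_set_def carrier_ER by simp

lemma C_zero: "(\<lambda>x. 0) \<in> finrank_ideal scale"
proof -
  have "range (\<lambda>x::'b. 0::'b) = span {}" by simp
  thus ?thesis unfolding C_def' using mh_zero fd_span[of "{}"] by auto
qed

lemma C_comp_l: "f \<in> finrank_ideal scale \<Longrightarrow> module_hom scale scale a \<Longrightarrow> a \<circ> f \<in> finrank_ideal scale"
  unfolding C_def' using fd_image[of a "range f"] mh_comp by (auto simp: image_comp)

lemma C_comp_r: "f \<in> finrank_ideal scale \<Longrightarrow> module_hom scale scale a \<Longrightarrow> f \<circ> a \<in> finrank_ideal scale"
proof -
  assume f: "f \<in> finrank_ideal scale" and a: "module_hom scale scale a"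
  have m: "module_hom scale scale (f \<circ> a)" using f a mh_comp unfolding C_def' by auto
  have "range (f \<circ> a) \<subseteq> range f" by auto
  hence "fin_dim scale (range (f \<circ> a))"
    using fd_sub[of "range f" "range (f \<circ> a)"] subspace_range[OF m] f unfolding C_def' by auto
  thus ?thesis using m unfolding C_def' by auto
qed

lemma C_add:
  assumes "f \<in> finrank_ideal scale" "g \<in> finrank_ideal scale"
  shows "(\<lambda>x. f x + g x) \<in> finrank_ideal scale"
proof -
  obtain D1 where D1: "finite D1" "span D1 = range f" using assms(1) unfolding C_def' fin_dim_def by blast
  obtain D2 where D2: "finite D2" "span D2 = range g" using assms(2) unfolding C_def' fin_dim_def by blast
  have mh: "module_hom scale scale (\<lambda>x. f x + g x)" using assms mh_add unfolding C_def' by auto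
  have "range (\<lambda>x. f x + g x) \<subseteq> span (D1 \<union> D2)"
  proof
    fix y assume "y \<in> range (\<lambda>x. f x + g x)"
    then obtain x where x: "y = f x + g x" by auto
    have "f x \<in> span (D1 \<union> D2)" using D1(2) span_mono[of D1 "D1 \<union> D2"] by auto
    moreover have "g x \<in> span (D1 \<union> D2)" using D2(2) span_mono[of D2 "D1 \<union> D2"] by auto
    ultimately show "y \<in> span (D1 \<union> D2)" using x span_add by auto
  qed
  hence "fin_dim scale (range (\<lambda>x. f x + g x))"
    using fd_sub[OF fd_span[of "D1 \<union> D2"] subspace_range[OF mh]] D1 D2 by auto
  thus ?thesis using mh unfolding C_def' by auto
qed

lemma ideal_C: "ideal (finrank_ideal scale) (End_ring scale)"
proof -
  interpret R: ring "End_ring scale" by (rule ring_ER)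
  show ?thesis
  proof (rule idealI[OF ring_ER])
    have inv: "\<ominus>\<^bsub>End_ring scale\<^esub> a \<in> finrank_ideal scale" if a: "a \<in> finrank_ideal scale" for a
    proof -
      have ac: "a \<in> carrier (End_ring scale)" using a by (auto simp: finrank_ideal_def)
      have "\<ominus>\<^bsub>End_ring scale\<^esub> a = (\<lambda>x. - a x)" using ER_a_inv[OF ac] .
      also have "\<dots> = (\<lambda>x. - x) \<circ> a" by (simp add: comp_def)
      finally show ?thesis
        using C_comp_l[OF a, of "\<lambda>x. - x"] mh_neg[OF mh_id] by simp
    qed
    have sub: "finrank_ideal scale \<subseteq> carrier (End_ring scale)" by (auto simp: finrank_ideal_def)
    show "subgroup (finrank_ideal scale) (add_monoid (End_ring scale))"
      by (rule R.add.subgroupI) (use sub inv C_zero C_add in auto)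
  next
    fix a x assume "a \<in> finrank_ideal scale" "x \<in> carrier (End_ring scale)"
    thus "x \<otimes>\<^bsub>End_ring scale\<^esub> a \<in> finrank_ideal scale" "a \<otimes>\<^bsub>End_ring scale\<^esub> x \<in> finrank_ideal scale"
      using C_comp_l C_comp_r by (auto simp: carrier_ER)
  qed
qed

lemma kerC:
  assumes f: "module_hom scale scale f"
    and h: "\<And>g. module_hom scale scale g \<Longrightarrow> f \<circ> g = (\<lambda>x. 0) \<Longrightarrow> g \<in> finrank_ideal scale"
  shows "fin_dim scale {x. f x = 0}"
proof -
  obtain P where P: "module_hom scale scale P" "range P = {x. f x = 0}" "\<And>x. x \<in> {x. f x = 0} \<Longrightarrow> P x = x"
    using proj_exists[OF subspace_ker[OF f]] by blast
  have "f \<circ> P = (\<lambda>x. 0)" using P(2) by (auto simp: fun_eq_iff)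
  hence "P \<in> finrank_ideal scale" using h P(1) by blast
  thus ?thesis using P(2) unfolding C_def' by simp
qed

lemma ker0:
  assumes f: "module_hom scale scale f"
    and h: "\<And>g. module_hom scale scale g \<Longrightarrow> f \<circ> g = (\<lambda>x. 0) \<Longrightarrow> g = (\<lambda>x. 0)"
  shows "inj f"
proof -
  obtain P where P: "module_hom scale scale P" "range P = {x. f x = 0}" "\<And>x. x \<in> {x. f x = 0} \<Longrightarrow> P x = x"
    using proj_exists[OF subspace_ker[OF f]] by blast
  have "f \<circ> P = (\<lambda>x. 0)" using P(2) by (auto simp: fun_eq_iff)
  hence "P = (\<lambda>x. 0)" using h P(1) by blast
  hence "\<forall>x. f x = 0 \<longrightarrow> x = 0" using P(3) by auto
  thus ?thesis using module_hom.inj_iff_eq_0[OF f] by simp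
qed

lemma cokerC:
  assumes f: "module_hom scale scale f"
    and h: "\<And>g. module_hom scale scale g \<Longrightarrow> g \<circ> f = (\<lambda>x. 0) \<Longrightarrow> g \<in> finrank_ideal scale"
  shows "fin_codim scale (range f)"
proof -
  obtain P where P: "module_hom scale scale P" "range P = range f" "\<And>x. x \<in> range f \<Longrightarrow> P x = x"
    using proj_exists[OF subspace_range[OF f]] by blast
  define g where "g = (\<lambda>x. x - P x)"
  have gm: "module_hom scale scale g" unfolding g_def using mh_diff[OF mh_id P(1)] .
  have "g \<circ> f = (\<lambda>x. 0)" using P(3) by (auto simp: fun_eq_iff g_def)
  hence "g \<in> finrank_ideal scale" using h gm by blast
  then obtain B where B: "finite B" "span B = range g" unfolding C_def' fin_dim_def by blast
  have "x \<in> span (range f \<union> B)" for x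
  proof -
    have "P x \<in> span (range f \<union> B)" using P(2) span_superset[of "range f \<union> B"] by blast
    moreover have "g x \<in> span (range f \<union> B)" using B(2) span_mono[of B "range f \<union> B"] by auto
    ultimately have "P x + g x \<in> span (range f \<union> B)" by (rule span_add)
    thus ?thesis by (simp add: g_def)
  qed
  thus ?thesis unfolding fin_codim_def using B(1) by blast
qed

lemma coker0:
  assumes f: "module_hom scale scale f"
    and h: "\<And>g. module_hom scale scale g \<Longrightarrow> g \<circ> f = (\<lambda>x. 0) \<Longrightarrow> g = (\<lambda>x. 0)"
  shows "surj f"
proof -
  obtain P where P: "module_hom scale scale P" "range P = range f" "\<And>x. x \<in> range f \<Longrightarrow> P x = x"
    using proj_exists[OF subspace_range[OF f]] by blast
  define g where "g = (\<lambda>x. x - P x)"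
  have gm: "module_hom scale scale g" unfolding g_def using mh_diff[OF mh_id P(1)] .
  have "g \<circ> f = (\<lambda>x. 0)" using P(3) by (auto simp: fun_eq_iff g_def)
  hence "g = (\<lambda>x. 0)" using h gm by blast
  hence "x = P x" for x by (metis g_def eq_iff_diff_eq_0)
  thus ?thesis using P(2) by (metis rangeI surjI)
qed

lemma regC_F:
  assumes f: "module_hom scale scale f"
    and h1: "\<And>g. module_hom scale scale g \<Longrightarrow> f \<circ> g = (\<lambda>x. 0) \<Longrightarrow> g \<in> finrank_ideal scale"
    and h2: "\<And>g. module_hom scale scale g \<Longrightarrow> g \<circ> f = (\<lambda>x. 0) \<Longrightarrow> g \<in> finrank_ideal scale"
  shows "f \<in> fredholm_set scale"
  unfolding F_def' using kerC[OF f h1] cokerC[OF f h2] f by blast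

lemma reg0_Aut:
  assumes f: "module_hom scale scale f"
    and h1: "\<And>g. module_hom scale scale g \<Longrightarrow> f \<circ> g = (\<lambda>x. 0) \<Longrightarrow> g = (\<lambda>x. 0)"
    and h2: "\<And>g. module_hom scale scale g \<Longrightarrow> g \<circ> f = (\<lambda>x. 0) \<Longrightarrow> g = (\<lambda>x. 0)"
  shows "f \<in> Aut scale"
  unfolding Aut_def using ker0[OF f h1] coker0[OF f h2] f by (simp add: lin_mh bij_def)

end

context vector_space begin

lemma C_neg: "f \<in> finrank_ideal scale \<Longrightarrow> (\<lambda>x. - f x) \<in> finrank_ideal scale"
  using C_comp_l[of f "\<lambda>x. - x"] mh_neg[OF mh_id] by (simp add: comp_def)

lemma proj_C: "module_hom scale scale P \<Longrightarrow> fin_dim scale (range P) \<Longrightarrow> P \<in> finrank_ideal scale"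
  unfolding C_def' by simp

lemma codim_proj_C:
  assumes W: "fin_codim scale W" and P: "module_hom scale scale P" "range P = W" "\<And>x. x \<in> W \<Longrightarrow> P x = x"
  shows "(\<lambda>x. x - P x) \<in> finrank_ideal scale"
proof -
  obtain B where B: "finite B" "span (W \<union> B) = UNIV" using W unfolding fin_codim_def by blast
  define \<rho> where "\<rho> = (\<lambda>x. x - P x)"
  have m: "module_hom scale scale \<rho>" unfolding \<rho>_def using mh_diff[OF mh_id P(1)] .
  have "\<rho> ` (W \<union> B) \<subseteq> span (\<rho> ` B)"
  proof
    fix y assume "y \<in> \<rho> ` (W \<union> B)"
    then obtain x where x: "x \<in> W \<union> B" "y = \<rho> x" by auto
    show "y \<in> span (\<rho> ` B)"
    proof (cases "x \<in> W")
      case True then have "y = 0" using x P(3) by (simp add: \<rho>_def)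
      then show ?thesis by (simp add: span_zero)
    next
      case False then show ?thesis using x by (auto intro: span_base)
    qed
  qed
  hence "span (\<rho> ` (W \<union> B)) \<subseteq> span (\<rho> ` B)" by (simp add: span_minimal)
  hence "range \<rho> \<subseteq> span (\<rho> ` B)" using module_hom.span_image[OF m, of "W \<union> B"] B(2) by simp
  hence "fin_dim scale (range \<rho>)" using fd_sub[OF fd_span subspace_range[OF m]] B(1) by blast
  thus ?thesis unfolding \<rho>_def[symmetric] C_def' using m by simp
qed

lemma kerproj_C:
  assumes c: "c \<in> finrank_ideal scale" and P: "module_hom scale scale P" "range P = {x. c x = 0}"
    "\<And>x. c x = 0 \<Longrightarrow> P x = x"
  shows "(\<lambda>x. x - P x) \<in> finrank_ideal scale"
proof -
  have cm: "module_hom scale scale c" using c unfolding C_def' by simp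
  obtain D where D: "finite D" "span D = range c" using c unfolding C_def' fin_dim_def by blast
  have "\<forall>d\<in>D. \<exists>u. c u = d"
  proof
    fix d assume "d \<in> D" hence "d \<in> range c" using D(2) span_superset[of D] by blast
    thus "\<exists>u. c u = d" by (metis rangeE)
  qed
  then obtain u where u: "\<And>d. d \<in> D \<Longrightarrow> c (u d) = d" by metis
  define \<rho> where "\<rho> = (\<lambda>x. x - P x)"
  have m: "module_hom scale scale \<rho>" unfolding \<rho>_def using mh_diff[OF mh_id P(1)] .
  have cU: "c ` (u ` D) = D"
  proof -
    have "c ` (u ` D) = (\<lambda>d. d) ` D" unfolding image_image using u by (intro image_cong) auto
    thus ?thesis by simp
  qed
  have "range \<rho> \<subseteq> span (\<rho> ` (u ` D))"
  proof
    fix y assume "y \<in> range \<rho>"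
    then obtain x where x: "y = \<rho> x" by auto
    have "c x \<in> span D" using D(2) by auto
    also have "span D = c ` span (u ` D)" using module_hom.span_image[OF cm, of "u ` D"] cU by simp
    finally obtain v where v: "v \<in> span (u ` D)" "c x = c v" by auto
    have "c (x - v) = 0" using v(2) module_hom.diff[OF cm] by simp
    hence "P (x - v) = x - v" using P(3) by blast
    hence "P x - P v = x - v" using module_hom.diff[OF P(1), of x v] by simp
    hence "\<rho> x = \<rho> v" unfolding \<rho>_def by (simp add: algebra_simps)
    moreover have "\<rho> v \<in> span (\<rho> ` (u ` D))" using v(1) module_hom.span_image[OF m, of "u ` D"] by auto
    ultimately show "y \<in> span (\<rho> ` (u ` D))" using x by simp
  qed
  hence "fin_dim scale (range \<rho>)" using fd_sub[OF fd_span subspace_range[OF m]] D(1) by blast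
  thus ?thesis unfolding \<rho>_def[symmetric] C_def' using m by simp
qed

lemma F_pseudo_inv:
  assumes f: "f \<in> fredholm_set scale"
  shows "\<exists>g. module_hom scale scale g \<and> (\<lambda>x. g (f x) - x) \<in> finrank_ideal scale
      \<and> (\<lambda>x. f (g x) - x) \<in> finrank_ideal scale"
proof -
  have fm: "module_hom scale scale f" and K: "fin_dim scale {x. f x = 0}" and W: "fin_codim scale (range f)"
    using f unfolding F_def' by auto
  obtain P where P: "module_hom scale scale P" "range P = {x. f x = 0}" "\<And>x. x \<in> {x. f x = 0} \<Longrightarrow> P x = x"
    using proj_exists[OF subspace_ker[OF fm]] by blast
  obtain Q where Q: "module_hom scale scale Q" "range Q = range f" "\<And>x. x \<in> range f \<Longrightarrow> Q x = x"
    using proj_exists[OF subspace_range[OF fm]] by blast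
  define i where "i = (\<lambda>y. inv_into UNIV f (Q y))"
  have fi: "f (i y) = Q y" for y
  proof -
    have "Q y \<in> range f" using Q(2) by blast
    thus ?thesis unfolding i_def by (rule f_inv_into_f)
  qed
  have key: "x - P x = x' - P x'" if "f x = f x'" for x x'
  proof -
    have "f (x - x') = 0" using that module_hom.diff[OF fm] by simp
    hence "P (x - x') = x - x'" using P(3) by blast
    hence "P x - P x' = x - x'" using module_hom.diff[OF P(1)] by metis
    thus ?thesis by (simp add: algebra_simps)
  qed
  define g where "g = (\<lambda>y. i y - P (i y))"
  have gadd: "g (y1 + y2) = g y1 + g y2" for y1 y2
  proof -
    have "f (i (y1 + y2)) = f (i y1 + i y2)"
      using fi module_hom.add[OF fm] module_hom.add[OF Q(1)] by simp
    hence "g (y1 + y2) = (i y1 + i y2) - P (i y1 + i y2)" unfolding g_def by (rule key)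
    thus ?thesis using module_hom.add[OF P(1)] by (simp add: g_def algebra_simps)
  qed
  have gscale: "g (scale c y) = scale c (g y)" for c y
  proof -
    have "f (i (scale c y)) = f (scale c (i y))"
      using fi module_hom.scale[OF fm] module_hom.scale[OF Q(1)] by simp
    hence "g (scale c y) = scale c (i y) - P (scale c (i y))" unfolding g_def by (rule key)
    thus ?thesis using module_hom.scale[OF P(1)] by (simp add: g_def scale_right_diff_distrib)
  qed
  have gm: "module_hom scale scale g"
    unfolding module_hom_iff using gadd gscale module_axioms by auto
  have 1: "(\<lambda>x. g (f x) - x) = (\<lambda>x. - P x)"
  proof
    fix x
    have "f (i (f x)) = f x" using fi Q(3) by simp
    hence "g (f x) = x - P x" unfolding g_def by (rule key)
    thus "g (f x) - x = - P x" by simp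
  qed
  have PC: "P \<in> finrank_ideal scale" using proj_C[OF P(1)] P(2) K by simp
  have 2: "(\<lambda>x. f (g x) - x) = (\<lambda>x. - (x - Q x))"
  proof
    fix y
    have "f (P (i y)) = 0" using P(2) by auto
    hence "f (g y) = Q y" unfolding g_def using module_hom.diff[OF fm] fi by simp
    thus "f (g y) - y = - (y - Q y)" by simp
  qed
  have QC: "(\<lambda>x. x - Q x) \<in> finrank_ideal scale" using codim_proj_C[OF W Q] .
  show ?thesis using gm 1 2 C_neg[OF PC] C_neg[OF QC] by auto
qed

lemma ann_left:
  assumes c: "c \<in> finrank_ideal scale"
  shows "\<exists>P. module_hom scale scale P \<and> P \<in> finrank_ideal scale \<and> (\<lambda>x. c x - P (c x)) = (\<lambda>x. 0)"
proof -
  have cm: "module_hom scale scale c" and fd: "fin_dim scale (range c)" using c unfolding C_def' by auto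
  obtain P where P: "module_hom scale scale P" "range P = range c" "\<And>x. x \<in> range c \<Longrightarrow> P x = x"
    using proj_exists[OF subspace_range[OF cm]] by blast
  show ?thesis using P fd proj_C[OF P(1)] by (intro exI[of _ P]) auto
qed

lemma ann_right:
  assumes c: "c \<in> finrank_ideal scale"
  shows "\<exists>P. module_hom scale scale P \<and> (\<lambda>x. x - P x) \<in> finrank_ideal scale \<and> c \<circ> P = (\<lambda>x. 0)"
proof -
  have cm: "module_hom scale scale c" using c unfolding C_def' by auto
  obtain P where P: "module_hom scale scale P" "range P = {x. c x = 0}" "\<And>x. x \<in> {x. c x = 0} \<Longrightarrow> P x = x"
    using proj_exists[OF subspace_ker[OF cm]] by blast
  have "c \<circ> P = (\<lambda>x. 0)" using P(2) by (auto simp: fun_eq_iff)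
  thus ?thesis using kerproj_C[OF c P(1,2)] P by auto
qed

lemma infrank_inv:
  assumes basis: "\<exists>B. countable B \<and> infinite B \<and> independent B \<and> span B = UNIV"
    and r: "module_hom scale scale r" and nfd: "\<not> fin_dim scale (range r)"
  shows "\<exists>a b. module_hom scale scale a \<and> module_hom scale scale b \<and> a \<circ> r \<circ> b = (\<lambda>x. x)"
proof -
  interpret vp: vector_space_pair scale scale by unfold_locales
  obtain B0 where B0: "countable B0" "infinite B0" "independent B0" "span B0 = UNIV" using basis by blast
  obtain D where D: "D \<subseteq> range r" "independent D" "range r \<subseteq> span D"
    using maximal_independent_subset[of "range r"] by blast
  have "infinite D"
  proof
    assume "finite D"
    moreover have "span D = range r" using D span_minimal[OF D(1) subspace_range[OF r]] by blast
    ultimately show False using nfd unfolding fin_dim_def by blast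
  qed
  then obtain f :: "nat \<Rightarrow> 'b" where f: "inj f" "range f \<subseteq> D" using infinite_countable_subset by blast
  obtain e :: "'b \<Rightarrow> nat" where e: "bij_betw e B0 UNIV" using countableE_infinite[OF B0(1,2)] by blast
  define hb where "hb = f \<circ> e"
  have hbinj: "inj_on hb B0" unfolding hb_def
    by (rule comp_inj_on[OF bij_betw_imp_inj_on[OF e] inj_on_subset[OF f(1) subset_UNIV]])
  have "hb ` B0 \<subseteq> range f" unfolding hb_def image_comp[symmetric] by (rule image_mono) simp
  hence hbD: "hb ` B0 \<subseteq> D" using f(2) by (rule subset_trans)
  have "\<forall>b\<in>B0. \<exists>u. r u = hb b"
  proof
    fix b assume "b \<in> B0"
    hence "hb b \<in> range r" using hbD D(1) by blast
    thus "\<exists>u. r u = hb b" by (metis rangeE)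
  qed
  then obtain u where u: "\<forall>b\<in>B0. r (u b) = hb b" using bchoice[of B0 "\<lambda>b u. r u = hb b"] by blast
  define \<beta> where "\<beta> = vp.construct B0 u"
  have \<beta>m: "module_hom scale scale \<beta>" unfolding \<beta>_def lin_mh[symmetric] by (rule vp.linear_construct[OF B0(3)])
  have \<beta>b: "\<beta> b = u b" if "b \<in> B0" for b unfolding \<beta>_def using vp.construct_basis[OF B0(3) that] .
  have Di: "independent (hb ` B0)" using independent_mono[OF D(2) hbD] .
  define \<alpha> where "\<alpha> = vp.construct (hb ` B0) (the_inv_into B0 hb)"
  have \<alpha>m: "module_hom scale scale \<alpha>" unfolding \<alpha>_def lin_mh[symmetric] by (rule vp.linear_construct[OF Di])
  have \<alpha>b: "\<alpha> (hb b) = b" if "b \<in> B0" for b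
    unfolding \<alpha>_def using vp.construct_basis[OF Di, of "hb b"] that the_inv_into_f_f[OF hbinj that] by simp
  have comp: "module_hom scale scale (\<alpha> \<circ> r \<circ> \<beta>)" using mh_comp \<alpha>m \<beta>m r by blast
  have "(\<alpha> \<circ> r \<circ> \<beta>) x = x" for x
  proof (rule vp.linear_eq_on[of "\<alpha> \<circ> r \<circ> \<beta>" "\<lambda>x. x" x B0])
    show "Vector_Spaces.linear scale scale (\<alpha> \<circ> r \<circ> \<beta>)" using comp by (simp add: lin_mh)
    show "Vector_Spaces.linear scale scale (\<lambda>x. x)" by (simp add: lin_mh mh_id)
    show "x \<in> span B0" using B0(4) by simp
    show "(\<alpha> \<circ> r \<circ> \<beta>) b = b" if "b \<in> B0" for b using that \<beta>b u \<alpha>b by simp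
  qed
  thus ?thesis using \<alpha>m \<beta>m by (intro exI[of _ \<alpha>] exI[of _ \<beta>]) auto
qed

end

context vector_space begin

lemma rank_one_in:
  assumes A: "\<And>r a b. r \<in> A \<Longrightarrow> module_hom scale scale a \<Longrightarrow> module_hom scale scale b \<Longrightarrow> a \<circ> r \<circ> b \<in> A"
    and rA: "r \<in> A" and rm: "module_hom scale scale r" and rnz: "r \<noteq> (\<lambda>x. 0)"
    and cm: "module_hom scale scale c" and cr: "range c \<subseteq> span {d}"
    and z: "(\<lambda>x. 0) \<in> A"
  shows "c \<in> A"
proof (cases "d = 0")
  case True
  hence "c = (\<lambda>x. 0)" using cr by (auto simp: fun_eq_iff)
  thus ?thesis using z by simp
next
  case False
  interpret vp: vector_space_pair scale scale by unfold_locales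
  obtain v where v: "r v \<noteq> 0" using rnz by auto
  define w where "w = r v"
  have wi: "independent {w}" using v by (simp add: w_def)
  define \<alpha> where "\<alpha> = vp.construct {w} (\<lambda>_. d)"
  have \<alpha>m: "module_hom scale scale \<alpha>" unfolding \<alpha>_def lin_mh[symmetric] by (rule vp.linear_construct[OF wi])
  have \<alpha>w: "\<alpha> w = d" unfolding \<alpha>_def using vp.construct_basis[OF wi, of w] by simp
  obtain E where E: "independent E" "UNIV \<subseteq> span E" using maximal_independent_subset[of UNIV] by blast
  have "\<forall>e. \<exists>k. c e = scale k d" using cr by (auto simp: span_singleton)
  then obtain k where k: "\<And>e. c e = scale (k e) d" by metis
  define \<beta> where "\<beta> = vp.construct E (\<lambda>e. scale (k e) v)"
  have \<beta>m: "module_hom scale scale \<beta>" unfolding \<beta>_def lin_mh[symmetric] by (rule vp.linear_construct[OF E(1)])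
  have \<beta>e: "\<beta> e = scale (k e) v" if "e \<in> E" for e unfolding \<beta>_def using vp.construct_basis[OF E(1) that] .
  have comp: "module_hom scale scale (\<alpha> \<circ> r \<circ> \<beta>)" using mh_comp \<alpha>m \<beta>m rm by blast
  have "(\<alpha> \<circ> r \<circ> \<beta>) x = c x" for x
  proof (rule vp.linear_eq_on[of "\<alpha> \<circ> r \<circ> \<beta>" c x E])
    show "Vector_Spaces.linear scale scale (\<alpha> \<circ> r \<circ> \<beta>)" using comp by (simp add: lin_mh)
    show "Vector_Spaces.linear scale scale c" using cm by (simp add: lin_mh)
    show "x \<in> span E" using E(2) by blast
    show "(\<alpha> \<circ> r \<circ> \<beta>) e = c e" if "e \<in> E" for e
      using that \<beta>e k module_hom.scale[OF rm] module_hom.scale[OF \<alpha>m] \<alpha>w by (simp add: w_def)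
  qed
  hence "\<alpha> \<circ> r \<circ> \<beta> = c" by auto
  thus ?thesis using A[OF rA \<alpha>m \<beta>m] by simp
qed

lemma C_sub:
  assumes A: "\<And>r a b. r \<in> A \<Longrightarrow> module_hom scale scale a \<Longrightarrow> module_hom scale scale b \<Longrightarrow> a \<circ> r \<circ> b \<in> A"
    and add: "\<And>f g. f \<in> A \<Longrightarrow> g \<in> A \<Longrightarrow> (\<lambda>x. f x + g x) \<in> A"
    and rA: "r \<in> A" and rm: "module_hom scale scale r" and rnz: "r \<noteq> (\<lambda>x. 0)"
    and z: "(\<lambda>x. 0) \<in> A"
  shows "finrank_ideal scale \<subseteq> A"
proof -
  interpret vp: vector_space_pair scale scale by unfold_locales
  have claim: "finite B \<Longrightarrow> independent B \<Longrightarrow> \<forall>c. module_hom scale scale c \<and> range c \<subseteq> span B \<longrightarrow> c \<in> A" for B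
  proof (induction B rule: finite_induct)
    case empty
    show ?case
    proof (intro allI impI)
      fix c assume "module_hom scale scale c \<and> range c \<subseteq> span {}"
      hence "c = (\<lambda>x. 0)" by (auto simp: fun_eq_iff)
      thus "c \<in> A" using z by simp
    qed
  next
    case (insert d B)
    have iB: "independent B" and dB: "d \<notin> span B" using insert(1,2,4) by (auto simp: independent_insert)
    define \<pi> where "\<pi> = vp.construct (insert d B) (\<lambda>b. if b = d then d else 0)"
    have \<pi>m: "module_hom scale scale \<pi>" unfolding \<pi>_def lin_mh[symmetric] by (rule vp.linear_construct[OF insert(4)])
    have \<pi>d: "\<pi> d = d" unfolding \<pi>_def using vp.construct_basis[OF insert(4), of d] by simp
    have \<pi>b: "\<pi> b = 0" if "b \<in> B" for b unfolding \<pi>_def using vp.construct_basis[OF insert(4), of b] that insert(2) by auto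
    have "range \<pi> = span ((\<lambda>b. if b = d then d else 0) ` insert d B)"
      unfolding \<pi>_def by (rule vp.range_construct_eq_span[OF insert(4)])
    also have "\<dots> \<subseteq> span (insert 0 {d})" by (rule span_mono) auto
    finally have r\<pi>: "range \<pi> \<subseteq> span {d}" by simp
    define \<rho> where "\<rho> = (\<lambda>x. x - \<pi> x)"
    have \<rho>m: "module_hom scale scale \<rho>" unfolding \<rho>_def using mh_diff[OF mh_id \<pi>m] .
    have "\<rho> ` insert d B \<subseteq> insert 0 B" using \<pi>d \<pi>b by (auto simp: \<rho>_def)
    hence "span (\<rho> ` insert d B) \<subseteq> span B" using span_mono[of "\<rho> ` insert d B" "insert 0 B"] by simp
    hence r\<rho>: "\<rho> ` span (insert d B) \<subseteq> span B" using module_hom.span_image[OF \<rho>m, of "insert d B"] by metis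
    show ?case
    proof (intro allI impI)
      fix c assume c: "module_hom scale scale c \<and> range c \<subseteq> span (insert d B)"
      define c2 where "c2 = \<pi> \<circ> c"
      define c1 where "c1 = \<rho> \<circ> c"
      have c2m: "module_hom scale scale c2" unfolding c2_def using mh_comp \<pi>m c by blast
      have c1m: "module_hom scale scale c1" unfolding c1_def using mh_comp \<rho>m c by blast
      have "range c2 \<subseteq> span {d}" using r\<pi> unfolding c2_def by auto
      hence c2A: "c2 \<in> A" using rank_one_in[OF A rA rm rnz c2m _ z] by blast
      have "range c1 \<subseteq> span B" unfolding c1_def using r\<rho> c by auto
      hence c1A: "c1 \<in> A" using insert(3)[OF iB] c1m by blast
      have "c = (\<lambda>x. c1 x + c2 x)" by (auto simp: fun_eq_iff c1_def c2_def \<rho>_def)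
      thus "c \<in> A" using add[OF c1A c2A] by simp
    qed
  qed
  show ?thesis
  proof
    fix c assume c: "c \<in> finrank_ideal scale"
    have cm: "module_hom scale scale c" and fd: "fin_dim scale (range c)" using c unfolding C_def' by auto
    obtain D where D: "finite D" "span D = range c" using fd unfolding fin_dim_def by blast
    obtain B where B: "B \<subseteq> range c" "independent B" "range c \<subseteq> span B"
      using maximal_independent_subset[of "range c"] by blast
    have "finite B" using independent_span_bound[OF D(1) B(2)] B(1) D(2) by blast
    thus "c \<in> A" using claim[OF _ B(2)] B(3) cm by blast
  qed
qed

end

lemma G_id:
  fixes R (structure)
  assumes rR: "ring R" and nt: "\<one> \<noteq> \<zero>"
  shows "denom R (Units R) \<and> ass_l R (Units R) = {\<zero>} \<and> ass_r R (Units R) = {\<zero>}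
    \<and> left_localization R (Units R) R (\<lambda>x. x) \<and> right_localization R (Units R) R (\<lambda>x. x)"
proof -
  interpret ring R by fact
  have h: "(\<lambda>x. x) \<in> ring_hom R R" using id_ring_hom[of R] by (simp add: id_def)
  have I: "{\<zero>} = {r \<in> carrier R. r = \<zero>}" by auto
  have S: "Units R = {s \<in> carrier R. s \<in> Units R}" by auto
  show ?thesis
    by (rule G_main[OF rR rR h _ nt I S]) (use one_closed Units_one_closed in force)+
qed

lemma hom_eq_ker:
  fixes R (structure) and Q (structure)
  assumes "ring R" "ring Q" "h \<in> ring_hom R Q" "a \<in> carrier R" "b \<in> carrier R"
    "h (a \<ominus> b) = \<zero>\<^bsub>Q\<^esub>"
  shows "h a = h b"
proof -
  interpret R: ring R by fact
  interpret Q: ring Q by fact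
  interpret H: ring_hom_ring R Q h using assms(1-3) by (simp add: ring_hom_ring_def ring_hom_ring_axioms_def)
  have "a = (a \<ominus> b) \<oplus> b" using assms(4,5) by algebra
  hence "h a = h (a \<ominus> b) \<oplus>\<^bsub>Q\<^esub> h b" using assms(4,5) by (metis H.hom_add R.minus_closed)
  thus ?thesis using assms(5,6) by simp
qed

context vector_space begin

lemma ER_minus: "a \<in> carrier (End_ring scale) \<Longrightarrow> b \<in> carrier (End_ring scale) \<Longrightarrow>
   a \<ominus>\<^bsub>End_ring scale\<^esub> b = (\<lambda>x. a x - b x)"
  by (simp add: a_minus_def ER_a_inv)

lemma nontriv:
  assumes basis: "\<exists>B. countable B \<and> infinite B \<and> independent B \<and> span B = UNIV"
  shows "\<not> fin_dim scale UNIV"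
proof
  assume "fin_dim scale UNIV"
  then obtain D where D: "finite D" "span D = UNIV" unfolding fin_dim_def by blast
  obtain B where "infinite B" "independent B" using basis by blast
  thus False using independent_span_bound[OF D(1)] D(2) by auto
qed

lemma one_notin_C:
  assumes basis: "\<exists>B. countable B \<and> infinite B \<and> independent B \<and> span B = UNIV"
  shows "\<one>\<^bsub>End_ring scale\<^esub> \<notin> finrank_ideal scale"
  using nontriv[OF basis] unfolding C_def' by simp

lemma exists_nonzero:
  assumes basis: "\<exists>B. countable B \<and> infinite B \<and> independent B \<and> span B = UNIV"
  shows "\<exists>v::'b. v \<noteq> 0"
proof (rule ccontr)
  assume "\<not> ?thesis"
  hence "UNIV = span {}" by auto
  thus False using nontriv[OF basis] fd_span[of "{}"] by simp
qed

lemma C_nonzero: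
  assumes basis: "\<exists>B. countable B \<and> infinite B \<and> independent B \<and> span B = UNIV"
  shows "finrank_ideal scale \<noteq> {\<zero>\<^bsub>End_ring scale\<^esub>}"
proof -
  obtain v :: 'b where v: "v \<noteq> 0" using exists_nonzero[OF basis] by blast
  obtain P where P: "module_hom scale scale P" "range P = span {v}" "\<And>x. x \<in> span {v} \<Longrightarrow> P x = x"
    using proj_exists[of "span {v}"] by auto
  have "P \<in> finrank_ideal scale" using proj_C[OF P(1)] P(2) fd_span[of "{v}"] by simp
  moreover have "P v = v" using P(3) span_base[of v "{v}"] by simp
  hence "P \<noteq> (\<lambda>x. 0)" using v by auto
  ultimately show ?thesis by auto
qed

lemma ker_sigma: "r \<in> carrier (End_ring scale) \<Longrightarrow>
   (finrank_ideal scale +>\<^bsub>End_ring scale\<^esub> r = \<zero>\<^bsub>End_ring scale Quot finrank_ideal scale\<^esub>) = (r \<in> finrank_ideal scale)"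
  using quot_facts(4)[OF ideal_C] by blast

lemma sigma_eq:
  assumes "a \<in> carrier (End_ring scale)" "b \<in> carrier (End_ring scale)" "(\<lambda>x. a x - b x) \<in> finrank_ideal scale"
  shows "finrank_ideal scale +>\<^bsub>End_ring scale\<^esub> a = finrank_ideal scale +>\<^bsub>End_ring scale\<^esub> b"
proof (rule hom_eq_ker[OF ring_ER quot_facts(1,2)[OF ideal_C] assms(1,2)])
  interpret ring "End_ring scale" by (rule ring_ER)
  have "a \<ominus>\<^bsub>End_ring scale\<^esub> b \<in> finrank_ideal scale" using ER_minus[OF assms(1,2)] assms(3) by simp
  thus "finrank_ideal scale +>\<^bsub>End_ring scale\<^esub> (a \<ominus>\<^bsub>End_ring scale\<^esub> b) = \<zero>\<^bsub>End_ring scale Quot finrank_ideal scale\<^esub>"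
    using ker_sigma assms(1,2) by simp
qed

lemma F_units: "fredholm_set scale = {s \<in> carrier (End_ring scale).
   finrank_ideal scale +>\<^bsub>End_ring scale\<^esub> s \<in> Units (End_ring scale Quot finrank_ideal scale)}"
proof -
  let ?R = "End_ring scale" and ?C = "finrank_ideal scale"
  let ?Q = "?R Quot ?C" and ?h = "(+>\<^bsub>End_ring scale\<^esub>) (finrank_ideal scale)"
  interpret R: ring ?R by (rule ring_ER)
  interpret Q: ring ?Q by (rule quot_facts(1)[OF ideal_C])
  have hom: "?h \<in> ring_hom ?R ?Q" by (rule quot_facts(2)[OF ideal_C])
  have hm: "?h (a \<circ> b) = ?h a \<otimes>\<^bsub>?Q\<^esub> ?h b" if "a \<in> carrier ?R" "b \<in> carrier ?R" for a b
    using ring_hom_mult[OF hom that] by simp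
  have hc: "?h a \<in> carrier ?Q" if "a \<in> carrier ?R" for a using ring_hom_closed[OF hom that] .
  have h1: "?h (\<lambda>x. x) = \<one>\<^bsub>?Q\<^esub>" using ring_hom_one[OF hom] by simp
  have h0: "?h (\<lambda>x. 0) = \<zero>\<^bsub>?Q\<^esub>" using ring_hom_zero[OF hom ring_ER quot_facts(1)[OF ideal_C]] by simp
  show ?thesis
  proof (intro equalityI subsetI)
    fix s assume s: "s \<in> fredholm_set scale"
    hence sc: "s \<in> carrier ?R" unfolding fredholm_set_def by auto
    obtain g where g: "module_hom scale scale g" "(\<lambda>x. g (s x) - x) \<in> ?C" "(\<lambda>x. s (g x) - x) \<in> ?C"
      using F_pseudo_inv[OF s] by blast
    have gc: "g \<in> carrier ?R" using g(1) by (simp add: carrier_ER)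
    have idc: "(\<lambda>x. x) \<in> carrier ?R" by (simp add: carrier_ER mh_id)
    have gs: "g \<circ> s \<in> carrier ?R" "s \<circ> g \<in> carrier ?R" using gc sc by (auto simp: carrier_ER mh_comp)
    have "?h g \<otimes>\<^bsub>?Q\<^esub> ?h s = \<one>\<^bsub>?Q\<^esub>"
      using hm[OF gc sc] sigma_eq[OF gs(1) idc] g(2) h1 by simp
    moreover have "?h s \<otimes>\<^bsub>?Q\<^esub> ?h g = \<one>\<^bsub>?Q\<^esub>"
      using hm[OF sc gc] sigma_eq[OF gs(2) idc] g(3) h1 by simp
    ultimately have "?h s \<in> Units ?Q" unfolding Units_def using hc[OF sc] hc[OF gc] by blast
    thus "s \<in> {s \<in> carrier ?R. ?h s \<in> Units ?Q}" using sc by simp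
  next
    fix s assume "s \<in> {s \<in> carrier ?R. ?h s \<in> Units ?Q}"
    hence sc: "s \<in> carrier ?R" and su: "?h s \<in> Units ?Q" by auto
    have sm: "module_hom scale scale s" using sc by (simp add: carrier_ER)
    show "s \<in> fredholm_set scale"
    proof (rule regC_F[OF sm])
      fix g assume gm: "module_hom scale scale g" and e: "s \<circ> g = (\<lambda>x. 0)"
      have gc: "g \<in> carrier ?R" using gm by (simp add: carrier_ER)
      have "?h s \<otimes>\<^bsub>?Q\<^esub> ?h g = \<zero>\<^bsub>?Q\<^esub>" using hm[OF sc gc] e h0 by simp
      hence "?h g = \<zero>\<^bsub>?Q\<^esub>" using unit_cancel_l[OF quot_facts(1)[OF ideal_C] su hc[OF gc]] by simp
      thus "g \<in> ?C" using ker_sigma[OF gc] by simp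
    next
      fix g assume gm: "module_hom scale scale g" and e: "g \<circ> s = (\<lambda>x. 0)"
      have gc: "g \<in> carrier ?R" using gm by (simp add: carrier_ER)
      have "?h g \<otimes>\<^bsub>?Q\<^esub> ?h s = \<zero>\<^bsub>?Q\<^esub>" using hm[OF gc sc] e h0 by simp
      hence "?h g = \<zero>\<^bsub>?Q\<^esub>" using unit_cancel_r[OF quot_facts(1)[OF ideal_C] su hc[OF gc]] by simp
      thus "g \<in> ?C" using ker_sigma[OF gc] by simp
    qed
  qed
qed

lemma inst0:
  assumes basis: "\<exists>B. countable B \<and> infinite B \<and> independent B \<and> span B = UNIV"
  shows "denom (End_ring scale) (Aut scale) \<and> ass_l (End_ring scale) (Aut scale) = {\<zero>\<^bsub>End_ring scale\<^esub>}
    \<and> ass_r (End_ring scale) (Aut scale) = {\<zero>\<^bsub>End_ring scale\<^esub>}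
    \<and> left_localization (End_ring scale) (Aut scale) (End_ring scale) (\<lambda>x. x)
    \<and> right_localization (End_ring scale) (Aut scale) (End_ring scale) (\<lambda>x. x)"
proof -
  obtain v :: 'b where "v \<noteq> 0" using exists_nonzero[OF basis] by blast
  hence nt: "\<one>\<^bsub>End_ring scale\<^esub> \<noteq> \<zero>\<^bsub>End_ring scale\<^esub>" by (auto simp: fun_eq_iff)
  show ?thesis using G_id[OF ring_ER nt] Units_ER by simp
qed

lemma instC:
  assumes basis: "\<exists>B. countable B \<and> infinite B \<and> independent B \<and> span B = UNIV"
  shows "denom (End_ring scale) (fredholm_set scale) \<and> ass_l (End_ring scale) (fredholm_set scale) = finrank_ideal scale
    \<and> ass_r (End_ring scale) (fredholm_set scale) = finrank_ideal scale
    \<and> left_localization (End_ring scale) (fredholm_set scale) (End_ring scale Quot finrank_ideal scale)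
        ((+>\<^bsub>End_ring scale\<^esub>) (finrank_ideal scale))
    \<and> right_localization (End_ring scale) (fredholm_set scale) (End_ring scale Quot finrank_ideal scale)
        ((+>\<^bsub>End_ring scale\<^esub>) (finrank_ideal scale))"
proof -
  let ?R = "End_ring scale" and ?C = "finrank_ideal scale"
  let ?Q = "?R Quot ?C" and ?h = "(+>\<^bsub>End_ring scale\<^esub>) (finrank_ideal scale)"
  have qf: "ring ?Q" "?h \<in> ring_hom ?R ?Q" "?h ` carrier ?R = carrier ?Q"
    "{r \<in> carrier ?R. ?h r = \<zero>\<^bsub>?Q\<^esub>} = ?C" "\<one>\<^bsub>?Q\<^esub> \<noteq> \<zero>\<^bsub>?Q\<^esub>"
    using quot_facts[OF ideal_C] one_notin_C[OF basis] by auto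
  have hom: "?h \<in> ring_hom ?R ?Q" by (rule qf(2))
  interpret Q: ring ?Q by (rule qf(1))
  have idc: "(\<lambda>x. x) \<in> carrier ?R" by (simp add: carrier_ER mh_id)
  have h1: "?h (\<lambda>x. x) = \<one>\<^bsub>?Q\<^esub>" using ring_hom_one[OF hom] by simp
  have unit1: "P \<in> {s \<in> carrier ?R. ?h s \<in> Units ?Q}"
    if "module_hom scale scale P" "(\<lambda>x. P x - x) \<in> ?C" for P
  proof -
    have Pc: "P \<in> carrier ?R" using that by (simp add: carrier_ER)
    have "?h P = \<one>\<^bsub>?Q\<^esub>" using sigma_eq[OF Pc idc] that(2) h1 by simp
    thus ?thesis using Pc by simp
  qed
  show ?thesis
  proof (rule G_main[OF ring_ER qf(1,2,3,5) qf(4)[symmetric] F_units])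
    fix c assume c: "c \<in> ?C"
    obtain P where P: "module_hom scale scale P" "P \<in> ?C" "(\<lambda>x. c x - P (c x)) = (\<lambda>x. 0)"
      using ann_left[OF c] by blast
    have tm: "module_hom scale scale (\<lambda>x. x - P x)" using mh_diff[OF mh_id P(1)] .
    have "(\<lambda>x. (x - P x) - x) \<in> ?C" using C_neg[OF P(2)] by simp
    hence "(\<lambda>x. x - P x) \<in> {s \<in> carrier ?R. ?h s \<in> Units ?Q}" using unit1[OF tm] by simp
    moreover have "(\<lambda>x. x - P x) \<otimes>\<^bsub>?R\<^esub> c = \<zero>\<^bsub>?R\<^esub>" using P(3) by (simp add: comp_def)
    ultimately show "\<exists>t\<in>fredholm_set scale. t \<otimes>\<^bsub>?R\<^esub> c = \<zero>\<^bsub>?R\<^esub>" using F_units by blast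
  next
    fix c assume c: "c \<in> ?C"
    obtain P where P: "module_hom scale scale P" "(\<lambda>x. x - P x) \<in> ?C" "c \<circ> P = (\<lambda>x. 0)"
      using ann_right[OF c] by blast
    have "(\<lambda>x. P x - x) \<in> ?C" using C_neg[OF P(2)] by simp
    hence "P \<in> {s \<in> carrier ?R. ?h s \<in> Units ?Q}" using unit1[OF P(1)] by simp
    moreover have "c \<otimes>\<^bsub>?R\<^esub> P = \<zero>\<^bsub>?R\<^esub>" using P(3) by simp
    ultimately show "\<exists>t\<in>fredholm_set scale. c \<otimes>\<^bsub>?R\<^esub> t = \<zero>\<^bsub>?R\<^esub>" using F_units by blast
  qed
qed

end

context vector_space begin

lemma largest_l0:
  assumes ld: "left_denom (End_ring scale) T" and a: "ass_l (End_ring scale) T = {\<zero>\<^bsub>End_ring scale\<^esub>}"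
  shows "T \<subseteq> Aut scale"
proof
  fix t assume t: "t \<in> T"
  hence tc: "t \<in> carrier (End_ring scale)" using ld_carrier[OF ld] by auto
  show "t \<in> Aut scale"
  proof (rule reg0_Aut)
    show "module_hom scale scale t" using tc by (simp add: carrier_ER)
  next
    fix g assume "module_hom scale scale g" "t \<circ> g = (\<lambda>x. 0)"
    thus "g = (\<lambda>x. 0)" using ld_reg(1)[OF ld t, of g] a by (simp add: carrier_ER)
  next
    fix g assume "module_hom scale scale g" "g \<circ> t = (\<lambda>x. 0)"
    thus "g = (\<lambda>x. 0)" using ld_reg(2)[OF ld t, of g] a by (simp add: carrier_ER)
  qed
qed

lemma largest_r0:
  assumes ld: "right_denom (End_ring scale) T" and a: "ass_r (End_ring scale) T = {\<zero>\<^bsub>End_ring scale\<^esub>}"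
  shows "T \<subseteq> Aut scale"
proof
  fix t assume t: "t \<in> T"
  hence tc: "t \<in> carrier (End_ring scale)" using rd_carrier[OF ld] by auto
  show "t \<in> Aut scale"
  proof (rule reg0_Aut)
    show "module_hom scale scale t" using tc by (simp add: carrier_ER)
  next
    fix g assume "module_hom scale scale g" "t \<circ> g = (\<lambda>x. 0)"
    thus "g = (\<lambda>x. 0)" using rd_reg(1)[OF ld t, of g] a by (simp add: carrier_ER)
  next
    fix g assume "module_hom scale scale g" "g \<circ> t = (\<lambda>x. 0)"
    thus "g = (\<lambda>x. 0)" using rd_reg(2)[OF ld t, of g] a by (simp add: carrier_ER)
  qed
qed

lemma largest_lC:
  assumes ld: "left_denom (End_ring scale) T" and a: "ass_l (End_ring scale) T = finrank_ideal scale"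
  shows "T \<subseteq> fredholm_set scale"
proof
  fix t assume t: "t \<in> T"
  hence tc: "t \<in> carrier (End_ring scale)" using ld_carrier[OF ld] by auto
  show "t \<in> fredholm_set scale"
  proof (rule regC_F)
    show "module_hom scale scale t" using tc by (simp add: carrier_ER)
  next
    fix g assume "module_hom scale scale g" "t \<circ> g = (\<lambda>x. 0)"
    thus "g \<in> finrank_ideal scale" using ld_reg(1)[OF ld t, of g] a by (simp add: carrier_ER)
  next
    fix g assume "module_hom scale scale g" "g \<circ> t = (\<lambda>x. 0)"
    thus "g \<in> finrank_ideal scale" using ld_reg(2)[OF ld t, of g] a by (simp add: carrier_ER)
  qed
qed

lemma largest_rC:
  assumes ld: "right_denom (End_ring scale) T" and a: "ass_r (End_ring scale) T = finrank_ideal scale"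
  shows "T \<subseteq> fredholm_set scale"
proof
  fix t assume t: "t \<in> T"
  hence tc: "t \<in> carrier (End_ring scale)" using rd_carrier[OF ld] by auto
  show "t \<in> fredholm_set scale"
  proof (rule regC_F)
    show "module_hom scale scale t" using tc by (simp add: carrier_ER)
  next
    fix g assume "module_hom scale scale g" "t \<circ> g = (\<lambda>x. 0)"
    thus "g \<in> finrank_ideal scale" using rd_reg(1)[OF ld t, of g] a by (simp add: carrier_ER)
  next
    fix g assume "module_hom scale scale g" "g \<circ> t = (\<lambda>x. 0)"
    thus "g \<in> finrank_ideal scale" using rd_reg(2)[OF ld t, of g] a by (simp add: carrier_ER)
  qed
qed

lemma class_l:
  assumes basis: "\<exists>B. countable B \<and> infinite B \<and> independent B \<and> span B = UNIV"
    and ld: "left_denom (End_ring scale) T"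
  shows "ass_l (End_ring scale) T = {\<zero>\<^bsub>End_ring scale\<^esub>} \<or> ass_l (End_ring scale) T = finrank_ideal scale"
proof -
  let ?A = "ass_l (End_ring scale) T"
  have Ac: "?A \<subseteq> carrier (End_ring scale)" unfolding ass_l_def by auto
  have mult: "a \<circ> r \<circ> b \<in> ?A" if "r \<in> ?A" "module_hom scale scale a" "module_hom scale scale b" for r a b
    using ld_ass_mult[OF ring_ER ld that(1), of a b] that by (simp add: carrier_ER)
  have sub: "?A \<subseteq> finrank_ideal scale"
  proof
    fix r assume r: "r \<in> ?A"
    hence rm: "module_hom scale scale r" using Ac by (auto simp: carrier_ER)
    show "r \<in> finrank_ideal scale"
    proof (rule ccontr)
      assume "r \<notin> finrank_ideal scale"
      hence "\<not> fin_dim scale (range r)" using rm unfolding C_def' by simp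
      then obtain a b where ab: "module_hom scale scale a" "module_hom scale scale b" "a \<circ> r \<circ> b = (\<lambda>x. x)"
        using infrank_inv[OF basis rm] by blast
      have "\<one>\<^bsub>End_ring scale\<^esub> \<in> ?A" using mult[OF r ab(1,2)] ab(3) by simp
      thus False using ld_ass_one[OF ring_ER ld] by simp
    qed
  qed
  show ?thesis
  proof (cases "?A = {\<zero>\<^bsub>End_ring scale\<^esub>}")
    case False
    have z: "(\<lambda>x. 0) \<in> ?A" using ld_ass_zero[OF ring_ER ld] by simp
    then obtain r where r: "r \<in> ?A" "r \<noteq> (\<lambda>x. 0)" using False by auto
    have rm: "module_hom scale scale r" using r Ac by (auto simp: carrier_ER)
    have add: "(\<lambda>x. f x + g x) \<in> ?A" if "f \<in> ?A" "g \<in> ?A" for f g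
      using ld_ass_add[OF ring_ER ld that] by simp
    have "finrank_ideal scale \<subseteq> ?A" by (rule C_sub[OF mult add r(1) rm r(2) z])
    thus ?thesis using sub by blast
  qed simp
qed

lemma class_r:
  assumes basis: "\<exists>B. countable B \<and> infinite B \<and> independent B \<and> span B = UNIV"
    and ld: "right_denom (End_ring scale) T"
  shows "ass_r (End_ring scale) T = {\<zero>\<^bsub>End_ring scale\<^esub>} \<or> ass_r (End_ring scale) T = finrank_ideal scale"
proof -
  let ?A = "ass_r (End_ring scale) T"
  have Ac: "?A \<subseteq> carrier (End_ring scale)" unfolding ass_r_def by auto
  have mult: "a \<circ> r \<circ> b \<in> ?A" if "r \<in> ?A" "module_hom scale scale a" "module_hom scale scale b" for r a b
    using rd_ass_mult[OF ring_ER ld that(1), of a b] that by (simp add: carrier_ER)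
  have sub: "?A \<subseteq> finrank_ideal scale"
  proof
    fix r assume r: "r \<in> ?A"
    hence rm: "module_hom scale scale r" using Ac by (auto simp: carrier_ER)
    show "r \<in> finrank_ideal scale"
    proof (rule ccontr)
      assume "r \<notin> finrank_ideal scale"
      hence "\<not> fin_dim scale (range r)" using rm unfolding C_def' by simp
      then obtain a b where ab: "module_hom scale scale a" "module_hom scale scale b" "a \<circ> r \<circ> b = (\<lambda>x. x)"
        using infrank_inv[OF basis rm] by blast
      have "\<one>\<^bsub>End_ring scale\<^esub> \<in> ?A" using mult[OF r ab(1,2)] ab(3) by simp
      thus False using rd_ass_one[OF ring_ER ld] by simp
    qed
  qed
  show ?thesis
  proof (cases "?A = {\<zero>\<^bsub>End_ring scale\<^esub>}")
    case False
    have z: "(\<lambda>x. 0) \<in> ?A" using rd_ass_zero[OF ring_ER ld] by simp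
    then obtain r where r: "r \<in> ?A" "r \<noteq> (\<lambda>x. 0)" using False by auto
    have rm: "module_hom scale scale r" using r Ac by (auto simp: carrier_ER)
    have add: "(\<lambda>x. f x + g x) \<in> ?A" if "f \<in> ?A" "g \<in> ?A" for f g
      using rd_ass_add[OF ring_ER ld that] by simp
    have "finrank_ideal scale \<subseteq> ?A" by (rule C_sub[OF mult add r(1) rm r(2) z])
    thus ?thesis using sub by blast
  qed simp
qed

end

context vector_space begin

lemma sig_facts:
  shows "ring (End_ring scale Quot finrank_ideal scale)"
    "(+>\<^bsub>End_ring scale\<^esub>) (finrank_ideal scale) \<in> ring_hom (End_ring scale) (End_ring scale Quot finrank_ideal scale)"
    "(+>\<^bsub>End_ring scale\<^esub>) (finrank_ideal scale) ` carrier (End_ring scale) = carrier (End_ring scale Quot finrank_ideal scale)"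
    "\<And>a b. a \<in> carrier (End_ring scale) \<Longrightarrow> b \<in> carrier (End_ring scale) \<Longrightarrow>
      finrank_ideal scale +>\<^bsub>End_ring scale\<^esub> (a \<circ> b) =
      (finrank_ideal scale +>\<^bsub>End_ring scale\<^esub> a) \<otimes>\<^bsub>End_ring scale Quot finrank_ideal scale\<^esub> (finrank_ideal scale +>\<^bsub>End_ring scale\<^esub> b)"
    "finrank_ideal scale +>\<^bsub>End_ring scale\<^esub> (\<lambda>x. 0) = \<zero>\<^bsub>End_ring scale Quot finrank_ideal scale\<^esub>"
    "finrank_ideal scale +>\<^bsub>End_ring scale\<^esub> (\<lambda>x. x) = \<one>\<^bsub>End_ring scale Quot finrank_ideal scale\<^esub>"
    "\<And>a. a \<in> carrier (End_ring scale) \<Longrightarrow> finrank_ideal scale +>\<^bsub>End_ring scale\<^esub> a \<in> carrier (End_ring scale Quot finrank_ideal scale)"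
proof -
  have hom: "(+>\<^bsub>End_ring scale\<^esub>) (finrank_ideal scale) \<in> ring_hom (End_ring scale) (End_ring scale Quot finrank_ideal scale)"
    by (rule quot_facts(2)[OF ideal_C])
  show "ring (End_ring scale Quot finrank_ideal scale)" by (rule quot_facts(1)[OF ideal_C])
  show "(+>\<^bsub>End_ring scale\<^esub>) (finrank_ideal scale) \<in> ring_hom (End_ring scale) (End_ring scale Quot finrank_ideal scale)"
    by (rule hom)
  show "(+>\<^bsub>End_ring scale\<^esub>) (finrank_ideal scale) ` carrier (End_ring scale) = carrier (End_ring scale Quot finrank_ideal scale)"
    by (rule quot_facts(3)[OF ideal_C])
  show "\<And>a b. a \<in> carrier (End_ring scale) \<Longrightarrow> b \<in> carrier (End_ring scale) \<Longrightarrow>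
      finrank_ideal scale +>\<^bsub>End_ring scale\<^esub> (a \<circ> b) =
      (finrank_ideal scale +>\<^bsub>End_ring scale\<^esub> a) \<otimes>\<^bsub>End_ring scale Quot finrank_ideal scale\<^esub> (finrank_ideal scale +>\<^bsub>End_ring scale\<^esub> b)"
    using ring_hom_mult[OF hom] by simp
  show "finrank_ideal scale +>\<^bsub>End_ring scale\<^esub> (\<lambda>x. 0) = \<zero>\<^bsub>End_ring scale Quot finrank_ideal scale\<^esub>"
    using ring_hom_zero[OF hom ring_ER quot_facts(1)[OF ideal_C]] by simp
  show "finrank_ideal scale +>\<^bsub>End_ring scale\<^esub> (\<lambda>x. x) = \<one>\<^bsub>End_ring scale Quot finrank_ideal scale\<^esub>"
    using ring_hom_one[OF hom] by simp
  show "\<And>a. a \<in> carrier (End_ring scale) \<Longrightarrow> finrank_ideal scale +>\<^bsub>End_ring scale\<^esub> a \<in> carrier (End_ring scale Quot finrank_ideal scale)"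
    using ring_hom_closed[OF hom] by blast
qed

lemma Q_nt:
  assumes basis: "\<exists>B. countable B \<and> infinite B \<and> independent B \<and> span B = UNIV"
  shows "\<one>\<^bsub>End_ring scale Quot finrank_ideal scale\<^esub> \<noteq> \<zero>\<^bsub>End_ring scale Quot finrank_ideal scale\<^esub>"
  using quot_facts(5)[OF ideal_C one_notin_C[OF basis]] .

lemma Q_lift:
  assumes "q \<in> carrier (End_ring scale Quot finrank_ideal scale)"
  obtains r where "r \<in> carrier (End_ring scale)" "q = finrank_ideal scale +>\<^bsub>End_ring scale\<^esub> r"
  using assms sig_facts(3) by (metis imageE)

lemma Q_ass_l:
  assumes basis: "\<exists>B. countable B \<and> infinite B \<and> independent B \<and> span B = UNIV"
    and ld: "left_denom (End_ring scale Quot finrank_ideal scale) T"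
  shows "ass_l (End_ring scale Quot finrank_ideal scale) T = {\<zero>\<^bsub>End_ring scale Quot finrank_ideal scale\<^esub>}"
proof -
  let ?R = "End_ring scale" and ?C = "finrank_ideal scale"
  let ?Q = "?R Quot ?C" and ?h = "(+>\<^bsub>End_ring scale\<^esub>) (finrank_ideal scale)"
  have sub: "\<rho> = \<zero>\<^bsub>?Q\<^esub>" if rho: "\<rho> \<in> ass_l ?Q T" for \<rho>
  proof -
    have "\<rho> \<in> carrier ?Q" using rho unfolding ass_l_def by auto
    then obtain r where r: "r \<in> carrier ?R" "\<rho> = ?h r" using Q_lift by blast
    show ?thesis
    proof (cases "r \<in> ?C")
      case True thus ?thesis using ker_sigma[OF r(1)] r(2) by simp
    next
      case False
      have rm: "module_hom scale scale r" using r(1) by (simp add: carrier_ER)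
      hence "\<not> fin_dim scale (range r)" using False unfolding C_def' by simp
      then obtain a b where ab: "module_hom scale scale a" "module_hom scale scale b" "a \<circ> r \<circ> b = (\<lambda>x. x)"
        using infrank_inv[OF basis rm] by blast
      have ac: "a \<in> carrier ?R" and bc: "b \<in> carrier ?R" using ab by (auto simp: carrier_ER)
      have "?h a \<otimes>\<^bsub>?Q\<^esub> \<rho> \<otimes>\<^bsub>?Q\<^esub> ?h b \<in> ass_l ?Q T"
        using ld_ass_mult[OF sig_facts(1) ld rho sig_facts(7)[OF ac] sig_facts(7)[OF bc]] .
      moreover have "?h a \<otimes>\<^bsub>?Q\<^esub> \<rho> \<otimes>\<^bsub>?Q\<^esub> ?h b = \<one>\<^bsub>?Q\<^esub>"
      proof -
        have arc: "a \<circ> r \<in> carrier ?R" using ac r(1) by (auto simp: carrier_ER mh_comp)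
        have "?h (a \<circ> r \<circ> b) = ?h a \<otimes>\<^bsub>?Q\<^esub> \<rho> \<otimes>\<^bsub>?Q\<^esub> ?h b"
          using sig_facts(4)[OF arc bc] sig_facts(4)[OF ac r(1)] r(2) by simp
        thus ?thesis using ab(3) sig_facts(6) by simp
      qed
      ultimately show ?thesis using ld_ass_one[OF sig_facts(1) ld] by simp
    qed
  qed
  thus ?thesis using ld_ass_zero[OF sig_facts(1) ld] by blast
qed

lemma Q_ass_r:
  assumes basis: "\<exists>B. countable B \<and> infinite B \<and> independent B \<and> span B = UNIV"
    and ld: "right_denom (End_ring scale Quot finrank_ideal scale) T"
  shows "ass_r (End_ring scale Quot finrank_ideal scale) T = {\<zero>\<^bsub>End_ring scale Quot finrank_ideal scale\<^esub>}"
proof -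
  let ?R = "End_ring scale" and ?C = "finrank_ideal scale"
  let ?Q = "?R Quot ?C" and ?h = "(+>\<^bsub>End_ring scale\<^esub>) (finrank_ideal scale)"
  have sub: "\<rho> = \<zero>\<^bsub>?Q\<^esub>" if rho: "\<rho> \<in> ass_r ?Q T" for \<rho>
  proof -
    have "\<rho> \<in> carrier ?Q" using rho unfolding ass_r_def by auto
    then obtain r where r: "r \<in> carrier ?R" "\<rho> = ?h r" using Q_lift by blast
    show ?thesis
    proof (cases "r \<in> ?C")
      case True thus ?thesis using ker_sigma[OF r(1)] r(2) by simp
    next
      case False
      have rm: "module_hom scale scale r" using r(1) by (simp add: carrier_ER)
      hence "\<not> fin_dim scale (range r)" using False unfolding C_def' by simp
      then obtain a b where ab: "module_hom scale scale a" "module_hom scale scale b" "a \<circ> r \<circ> b = (\<lambda>x. x)"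
        using infrank_inv[OF basis rm] by blast
      have ac: "a \<in> carrier ?R" and bc: "b \<in> carrier ?R" using ab by (auto simp: carrier_ER)
      have "?h a \<otimes>\<^bsub>?Q\<^esub> \<rho> \<otimes>\<^bsub>?Q\<^esub> ?h b \<in> ass_r ?Q T"
        using rd_ass_mult[OF sig_facts(1) ld rho sig_facts(7)[OF ac] sig_facts(7)[OF bc]] .
      moreover have "?h a \<otimes>\<^bsub>?Q\<^esub> \<rho> \<otimes>\<^bsub>?Q\<^esub> ?h b = \<one>\<^bsub>?Q\<^esub>"
      proof -
        have arc: "a \<circ> r \<in> carrier ?R" using ac r(1) by (auto simp: carrier_ER mh_comp)
        have "?h (a \<circ> r \<circ> b) = ?h a \<otimes>\<^bsub>?Q\<^esub> \<rho> \<otimes>\<^bsub>?Q\<^esub> ?h b"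
          using sig_facts(4)[OF arc bc] sig_facts(4)[OF ac r(1)] r(2) by simp
        thus ?thesis using ab(3) sig_facts(6) by simp
      qed
      ultimately show ?thesis using rd_ass_one[OF sig_facts(1) ld] by simp
    qed
  qed
  thus ?thesis using rd_ass_zero[OF sig_facts(1) ld] by blast
qed

lemma Q_regular_unit:
  assumes t: "t \<in> carrier (End_ring scale Quot finrank_ideal scale)"
    and h1: "\<And>q. q \<in> carrier (End_ring scale Quot finrank_ideal scale) \<Longrightarrow>
       t \<otimes>\<^bsub>End_ring scale Quot finrank_ideal scale\<^esub> q = \<zero>\<^bsub>End_ring scale Quot finrank_ideal scale\<^esub> \<Longrightarrow>
       q = \<zero>\<^bsub>End_ring scale Quot finrank_ideal scale\<^esub>"
    and h2: "\<And>q. q \<in> carrier (End_ring scale Quot finrank_ideal scale) \<Longrightarrow>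
       q \<otimes>\<^bsub>End_ring scale Quot finrank_ideal scale\<^esub> t = \<zero>\<^bsub>End_ring scale Quot finrank_ideal scale\<^esub> \<Longrightarrow>
       q = \<zero>\<^bsub>End_ring scale Quot finrank_ideal scale\<^esub>"
  shows "t \<in> Units (End_ring scale Quot finrank_ideal scale)"
proof -
  let ?R = "End_ring scale" and ?C = "finrank_ideal scale"
  let ?Q = "?R Quot ?C" and ?h = "(+>\<^bsub>End_ring scale\<^esub>) (finrank_ideal scale)"
  obtain f where f: "f \<in> carrier ?R" "t = ?h f" using Q_lift[OF t] by blast
  have fm: "module_hom scale scale f" using f(1) by (simp add: carrier_ER)
  have "f \<in> fredholm_set scale"
  proof (rule regC_F[OF fm])
    fix g assume gm: "module_hom scale scale g" and e: "f \<circ> g = (\<lambda>x. 0)"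
    have gc: "g \<in> carrier ?R" using gm by (simp add: carrier_ER)
    have "t \<otimes>\<^bsub>?Q\<^esub> ?h g = \<zero>\<^bsub>?Q\<^esub>" using sig_facts(4)[OF f(1) gc] e f(2) sig_facts(5) by simp
    hence "?h g = \<zero>\<^bsub>?Q\<^esub>" using h1 sig_facts(7)[OF gc] by blast
    thus "g \<in> ?C" using ker_sigma[OF gc] by simp
  next
    fix g assume gm: "module_hom scale scale g" and e: "g \<circ> f = (\<lambda>x. 0)"
    have gc: "g \<in> carrier ?R" using gm by (simp add: carrier_ER)
    have "?h g \<otimes>\<^bsub>?Q\<^esub> t = \<zero>\<^bsub>?Q\<^esub>" using sig_facts(4)[OF gc f(1)] e f(2) sig_facts(5) by simp
    hence "?h g = \<zero>\<^bsub>?Q\<^esub>" using h2 sig_facts(7)[OF gc] by blast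
    thus "g \<in> ?C" using ker_sigma[OF gc] by simp
  qed
  thus ?thesis using F_units f(2) by blast
qed

lemma Q_largest_l:
  assumes ld: "left_denom (End_ring scale Quot finrank_ideal scale) T"
    and a: "ass_l (End_ring scale Quot finrank_ideal scale) T = {\<zero>\<^bsub>End_ring scale Quot finrank_ideal scale\<^esub>}"
  shows "T \<subseteq> Units (End_ring scale Quot finrank_ideal scale)"
proof
  fix t assume t: "t \<in> T"
  show "t \<in> Units (End_ring scale Quot finrank_ideal scale)"
    by (rule Q_regular_unit) (use ld_carrier[OF ld] t ld_reg[OF ld t] a in auto)
qed

lemma Q_largest_r:
  assumes ld: "right_denom (End_ring scale Quot finrank_ideal scale) T"
    and a: "ass_r (End_ring scale Quot finrank_ideal scale) T = {\<zero>\<^bsub>End_ring scale Quot finrank_ideal scale\<^esub>}"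
  shows "T \<subseteq> Units (End_ring scale Quot finrank_ideal scale)"
proof
  fix t assume t: "t \<in> T"
  show "t \<in> Units (End_ring scale Quot finrank_ideal scale)"
    by (rule Q_regular_unit) (use rd_carrier[OF ld] t rd_reg[OF ld t] a in auto)
qed

end

theorem theorem5p2:
  fixes scale :: "'k::field \<Rightarrow> 'v::ab_group_add \<Rightarrow> 'v"
  assumes vs: "vector_space scale"
    and basis: "\<exists>B. countable B \<and> infinite B \<and> \<not> module.dependent scale B \<and>
                    module.span scale B = UNIV"
  shows
   "Ass_l (End_ring scale) = {{\<zero>\<^bsub>End_ring scale\<^esub>}, finrank_ideal scale} \<and>
    Ass_r (End_ring scale) = {{\<zero>\<^bsub>End_ring scale\<^esub>}, finrank_ideal scale} \<and>
    Ass (End_ring scale) = {{\<zero>\<^bsub>End_ring scale\<^esub>}, finrank_ideal scale} \<and>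
    \<comment> \<open>(2)\<close>
    S_l (End_ring scale) {\<zero>\<^bsub>End_ring scale\<^esub>} = Aut scale \<and>
    S_r (End_ring scale) {\<zero>\<^bsub>End_ring scale\<^esub>} = Aut scale \<and>
    S_d (End_ring scale) {\<zero>\<^bsub>End_ring scale\<^esub>} = Aut scale \<and>
    left_localization (End_ring scale) (S_l (End_ring scale) {\<zero>\<^bsub>End_ring scale\<^esub>})
       (End_ring scale) (\<lambda>x. x) \<and>
    right_localization (End_ring scale) (S_r (End_ring scale) {\<zero>\<^bsub>End_ring scale\<^esub>})
       (End_ring scale) (\<lambda>x. x) \<and>
    localization (End_ring scale) (S_d (End_ring scale) {\<zero>\<^bsub>End_ring scale\<^esub>})
       (End_ring scale) (\<lambda>x. x) \<and>
    \<comment> \<open>(3)\<close>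
    S_l (End_ring scale) (finrank_ideal scale) = fredholm_set scale \<and>
    S_r (End_ring scale) (finrank_ideal scale) = fredholm_set scale \<and>
    S_d (End_ring scale) (finrank_ideal scale) = fredholm_set scale \<and>
    left_localization (End_ring scale) (S_l (End_ring scale) (finrank_ideal scale))
       (End_ring scale Quot finrank_ideal scale) ((+>\<^bsub>End_ring scale\<^esub>) (finrank_ideal scale)) \<and>
    right_localization (End_ring scale) (S_r (End_ring scale) (finrank_ideal scale))
       (End_ring scale Quot finrank_ideal scale) ((+>\<^bsub>End_ring scale\<^esub>) (finrank_ideal scale)) \<and>
    localization (End_ring scale) (S_d (End_ring scale) (finrank_ideal scale))
       (End_ring scale Quot finrank_ideal scale) ((+>\<^bsub>End_ring scale\<^esub>) (finrank_ideal scale)) \<and>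
    \<comment> \<open>(4)\<close>
    maxAss_l (End_ring scale) = {finrank_ideal scale} \<and>
    maxAss_r (End_ring scale) = {finrank_ideal scale} \<and>
    maxAss (End_ring scale) = {finrank_ideal scale} \<and>
    \<comment> \<open>(5)\<close>
    loc_max (End_ring scale Quot finrank_ideal scale) \<and>
    left_loc_max (End_ring scale Quot finrank_ideal scale) \<and>
    right_loc_max (End_ring scale Quot finrank_ideal scale)"
proof -
  interpret vector_space scale by (rule vs)
  have b: "\<exists>B. countable B \<and> infinite B \<and> independent B \<and> span B = UNIV" using basis by simp
  let ?R = "End_ring scale" and ?C = "finrank_ideal scale" and ?F = "fredholm_set scale"
  let ?Q = "?R Quot ?C" and ?h = "(+>\<^bsub>End_ring scale\<^esub>) (finrank_ideal scale)"
  let ?A = "Aut scale" and ?U = "Units ?Q"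
  let ?z = "\<zero>\<^bsub>?R\<^esub>" and ?zQ = "\<zero>\<^bsub>?Q\<^esub>"
  have i0: "denom ?R ?A" "ass_l ?R ?A = {?z}" "ass_r ?R ?A = {?z}"
    "left_localization ?R ?A ?R (\<lambda>x. x)" "right_localization ?R ?A ?R (\<lambda>x. x)"
    using inst0[OF b] by auto
  have iC: "denom ?R ?F" "ass_l ?R ?F = ?C" "ass_r ?R ?F = ?C"
    "left_localization ?R ?F ?Q ?h" "right_localization ?R ?F ?Q ?h"
    using instC[OF b] by auto
  have iQ: "denom ?Q ?U" "ass_l ?Q ?U = {?zQ}" "ass_r ?Q ?U = {?zQ}"
    "left_localization ?Q ?U ?Q (\<lambda>x. x)" "right_localization ?Q ?U ?Q (\<lambda>x. x)"
    using G_id[OF sig_facts(1) Q_nt[OF b]] by auto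
  have ld: "left_denom R S" and rd: "right_denom R S" if "denom R S" for R :: "('v \<Rightarrow> 'v) ring" and S
    using that unfolding denom_def by auto
  have ldQ: "left_denom R S" and rdQ: "right_denom R S" if "denom R S" for R :: "('v \<Rightarrow> 'v) set ring" and S
    using that unfolding denom_def by auto
  have Ass_l: "Ass_l ?R = {{?z}, ?C}"
  proof
    show "Ass_l ?R \<subseteq> {{?z}, ?C}" unfolding Ass_l_def using class_l[OF b] by blast
    show "{{?z}, ?C} \<subseteq> Ass_l ?R" unfolding Ass_l_def using i0(1,2) iC(1,2) ld by blast
  qed
  have Ass_r: "Ass_r ?R = {{?z}, ?C}"
  proof
    show "Ass_r ?R \<subseteq> {{?z}, ?C}" unfolding Ass_r_def using class_r[OF b] by blast
    show "{{?z}, ?C} \<subseteq> Ass_r ?R" unfolding Ass_r_def using i0(1,3) iC(1,3) rd by blast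
  qed
  have Ass: "Ass ?R = {{?z}, ?C}"
  proof
    show "Ass ?R \<subseteq> {{?z}, ?C}" unfolding Ass_def ass_def using class_l[OF b] ld by blast
    show "{{?z}, ?C} \<subseteq> Ass ?R" unfolding Ass_def ass_def using i0(1,2) iC(1,2) by blast
  qed
  have Sl0: "S_l ?R {?z} = ?A" by (rule S_l_eq[OF ld[OF i0(1)] i0(2) largest_l0])
  have Sr0: "S_r ?R {?z} = ?A" by (rule S_r_eq[OF rd[OF i0(1)] i0(3) largest_r0])
  have Sd0: "S_d ?R {?z} = ?A"
    by (rule S_d_eq[OF i0(1)]) (use i0(2) largest_l0 ld in \<open>auto simp: ass_def\<close>)
  have SlC: "S_l ?R ?C = ?F" by (rule S_l_eq[OF ld[OF iC(1)] iC(2) largest_lC])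
  have SrC: "S_r ?R ?C = ?F" by (rule S_r_eq[OF rd[OF iC(1)] iC(3) largest_rC])
  have SdC: "S_d ?R ?C = ?F"
    by (rule S_d_eq[OF iC(1)]) (use iC(2) largest_lC ld in \<open>auto simp: ass_def\<close>)
  have zC: "{?z} \<subseteq> ?C" using C_zero by simp
  have Cnz: "?C \<noteq> {?z}" by (rule C_nonzero[OF b])
  have mx: "maximals {{?z}, ?C} = {?C}"
    unfolding maximals_def using zC Cnz by auto
  have SlQ: "S_l ?Q {?zQ} = ?U" by (rule S_l_eq[OF ldQ[OF iQ(1)] iQ(2) Q_largest_l])
  have SrQ: "S_r ?Q {?zQ} = ?U" by (rule S_r_eq[OF rdQ[OF iQ(1)] iQ(3) Q_largest_r])
  have SdQ: "S_d ?Q {?zQ} = ?U"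
    by (rule S_d_eq[OF iQ(1)]) (use iQ(2) Q_largest_l ldQ in \<open>auto simp: ass_def\<close>)
  have AsslQ: "Ass_l ?Q = {{?zQ}}"
  proof
    show "Ass_l ?Q \<subseteq> {{?zQ}}" unfolding Ass_l_def using Q_ass_l[OF b] by blast
    show "{{?zQ}} \<subseteq> Ass_l ?Q" unfolding Ass_l_def using iQ(1,2) ldQ by blast
  qed
  have AssrQ: "Ass_r ?Q = {{?zQ}}"
  proof
    show "Ass_r ?Q \<subseteq> {{?zQ}}" unfolding Ass_r_def using Q_ass_r[OF b] by blast
    show "{{?zQ}} \<subseteq> Ass_r ?Q" unfolding Ass_r_def using iQ(1,3) rdQ by blast
  qed
  have AssQ: "Ass ?Q = {{?zQ}}"
  proof
    show "Ass ?Q \<subseteq> {{?zQ}}" unfolding Ass_def ass_def using Q_ass_l[OF b] ldQ by blast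
    show "{{?zQ}} \<subseteq> Ass ?Q" unfolding Ass_def ass_def using iQ(1,2) by blast
  qed
  show ?thesis
    unfolding maxAss_l_def maxAss_r_def maxAss_def loc_max_def left_loc_max_def right_loc_max_def
      localization_def
    using Ass_l Ass_r Ass Sl0 Sr0 Sd0 SlC SrC SdC mx SlQ SrQ SdQ AsslQ AssrQ AssQ i0 iC iQ
    by simp
qed

end
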